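(* Let $\Lambda$ be a rank-2 Bratteli diagram with levels $(V_n)$ and path groupoid $G$. There is a unique automorphism $\alpha$ of $\Lambda$ such that $\alpha(e) = \mathcal{F}^{m_n}(e)$ for all $n$ and all $e\in V_n\Lambda^{e_1}$. This $\alpha$ induces a homeomorphism, also denoted $\alpha$, of $\Lambda^\infty$ by $\alpha(x) = \alpha\circ x$, which in turn induces an automorphism $\alpha$ of the topological groupoid $G$ with $\alpha(x,m,y) = (\alpha(x),m,\alpha(y))$.
   Context: A 2-graph is a countable category $\Lambda$ with a functor $d:\Lambda\to\mathbb{N}^2$ satisfying the factorisation property; $\Lambda^m=d^{-1}(m)$, $\Lambda^0$ the vertices; row-finite means each $v\Lambda^m$ is finite. Blue edges: $\Lambda^{e_1}$; red edges: $\Lambda^{e_2}$. A cycle is $\lambda$ with $d(\lambda)\ne0$, $r(\lambda)=s(\lambda)$ and $s(\lambda')\ne s(\lambda)$ whenever $\lambda=\lambda'\lambda''$ with $0<d(\lambda')<d(\lambda)$; it is isolated if whenever $\lambda=\lambda'\lambda''$ with $d(\lambda')\ne0$, $r(\lambda)\Lambda^{d(\lambda')}\setminus\{\lambda'\}$ and $\Lambda^{d(\lambda'')}s(\lambda)\setminus\{\lambda''\}$ are empty. A rank-2 Bratteli diagram is a row-finite 2-graph whose vertex set is a disjoint union of nonempty finite sets $V_n$ ($n\ge0$) with: (1) each blue edge in some $V_n\Lambda^{e_1}V_{n+1}$; (2) the blue graph has no sources and all sinks in $V_0$; (3) every vertex lies on an isolated red cycle and $\Lambda^{e_2}=\bigcup_nV_n\Lambda^{e_2}V_n$.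 For $e\in\Lambda^{e_1}$ let $f$ be the unique element of $\Lambda^{e_2}r(e)$ and $\mathcal{F}(e)$ the unique blue edge with $fe=\mathcal{F}(e)f'$ for a red edge $f'$; $o(e)$ is the least $k>0$ with $\mathcal{F}^k(e)=e$; $O_n=\operatorname{lcm}\{o(e):e\in V_n\Lambda^{e_1}\}$; $m_0=0$, $m_{n+1}=m_n+nO_n$. An automorphism of $\Lambda$ is a degree-preserving bijective functor. $\Omega_2$ is the 2-graph with vertices $\mathbb{N}^2$ and morphisms $(n,n+m)$; $\Lambda^\infty$ is the set of degree-preserving functors $x:\Omega_2\to\Lambda$, $\sigma^p(x)(m,n)=x(m+p,n+p)$, and for $\lambda\in\Lambda$, $Z(\lambda)=\{\lambda z: z\in s(\lambda)\Lambda^\infty\}$ generates the topology. The path groupoid is $G=\{(x,l-m,y)\in\Lambda^\infty\times\mathbb{Z}^2\times\Lambda^\infty : \sigma^l(x)=\sigma^m(y)\}$ with $(x,n,y)(y,k,z)=(x,n+k,z)$, $(x,n,y)^{-1}=(y,-n,x)$, and topology with basic open sets $Z(\lambda,\mu)=\{(\lambda z,d(\lambda)-d(\mu),\mu z): z\in s(\lambda)\Lambda^\infty\}$ for $s(\lambda)=s(\mu)$. *)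

theory Defs
  imports "HOL-Analysis.Analysis" "HOL-Library.Product_Plus" "HOL-Library.Product_Order"
begin

text \<open>A 2-graph is encoded as a small category whose morphisms form a set Mor of
elements of a type 'a; objects are identified with identity morphisms.
rg / sr are range and source (returning identity morphisms), cp is composition
(cp l m = l m, defined when sr l = rg m), dg is the degree functor to N^2.\<close>

record 'a two_graph =
  Mor :: "'a set"
  rg  :: "'a \<Rightarrow> 'a"
  sr  :: "'a \<Rightarrow> 'a"
  cp  :: "'a \<Rightarrow> 'a \<Rightarrow> 'a"
  dg  :: "'a \<Rightarrow> nat \<times> nat"

definition is_2graph :: "'a two_graph \<Rightarrow> bool" where
  "is_2graph L \<longleftrightarrow>
     countable (Mor L) \<and>
     (\<forall>l\<in>Mor L. rg L l \<in> Mor L \<and> sr L l \<in> Mor L \<and>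
        rg L (rg L l) = rg L l \<and> sr L (rg L l) = rg L l \<and>
        rg L (sr L l) = sr L l \<and> sr L (sr L l) = sr L l \<and>
        cp L (rg L l) l = l \<and> cp L l (sr L l) = l) \<and>
     (\<forall>l\<in>Mor L. \<forall>m\<in>Mor L. sr L l = rg L m \<longrightarrow>
        cp L l m \<in> Mor L \<and> rg L (cp L l m) = rg L l \<and> sr L (cp L l m) = sr L m \<and>
        dg L (cp L l m) = dg L l + dg L m) \<and>
     (\<forall>l\<in>Mor L. \<forall>m\<in>Mor L. \<forall>n\<in>Mor L. sr L l = rg L m \<and> sr L m = rg L n \<longrightarrow>
        cp L (cp L l m) n = cp L l (cp L m n)) \<and>
     (\<forall>l\<in>Mor L. \<forall>p q. dg L l = p + q \<longrightarrow>
        (\<exists>!mn. fst mn \<in> Mor L \<and> snd mn \<in> Mor L \<and> dg L (fst mn) = p \<and> dg L (snd mn) = q \<and>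
               sr L (fst mn) = rg L (snd mn) \<and> cp L (fst mn) (snd mn) = l))"

definition vertices :: "'a two_graph \<Rightarrow> 'a set" where
  "vertices L = {v \<in> Mor L. dg L v = 0}"
definition blue :: "'a two_graph \<Rightarrow> 'a set" where
  "blue L = {e \<in> Mor L. dg L e = (1,0)}"
definition red :: "'a two_graph \<Rightarrow> 'a set" where
  "red L = {f \<in> Mor L. dg L f = (0,1)}"

definition row_finite :: "'a two_graph \<Rightarrow> bool" where
  "row_finite L \<longleftrightarrow> (\<forall>v\<in>vertices L. \<forall>m. finite {l \<in> Mor L. rg L l = v \<and> dg L l = m})"

definition factors :: "'a two_graph \<Rightarrow> 'a \<Rightarrow> 'a \<Rightarrow> 'a \<Rightarrow> bool" where
  "factors L l l1 l2 \<longleftrightarrow> l1 \<in> Mor L \<and> l2 \<in> Mor L \<and> sr L l1 = rg L l2 \<and> l = cp L l1 l2"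

definition is_cycle :: "'a two_graph \<Rightarrow> 'a \<Rightarrow> bool" where
  "is_cycle L l \<longleftrightarrow> l \<in> Mor L \<and> dg L l \<noteq> 0 \<and> rg L l = sr L l \<and>
     (\<forall>l1 l2. factors L l l1 l2 \<and> 0 < dg L l1 \<and> dg L l1 < dg L l \<longrightarrow> sr L l1 \<noteq> sr L l)"

definition isolated_cycle :: "'a two_graph \<Rightarrow> 'a \<Rightarrow> bool" where
  "isolated_cycle L l \<longleftrightarrow> is_cycle L l \<and>
     (\<forall>l1 l2. factors L l l1 l2 \<and> dg L l1 \<noteq> 0 \<longrightarrow>
        {m \<in> Mor L. rg L m = rg L l \<and> dg L m = dg L l1} - {l1} = {} \<and>
        {m \<in> Mor L. sr L m = sr L l \<and> dg L m = dg L l2} - {l2} = {})"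

definition red_cycle :: "'a two_graph \<Rightarrow> 'a \<Rightarrow> bool" where
  "red_cycle L l \<longleftrightarrow> is_cycle L l \<and> fst (dg L l) = 0"

definition lies_on :: "'a two_graph \<Rightarrow> 'a \<Rightarrow> 'a \<Rightarrow> bool" where
  "lies_on L v l \<longleftrightarrow> (\<exists>l1 l2. factors L l l1 l2 \<and> sr L l1 = v)"

definition rank2_bratteli :: "'a two_graph \<Rightarrow> (nat \<Rightarrow> 'a set) \<Rightarrow> bool" where
  "rank2_bratteli L V \<longleftrightarrow>
     is_2graph L \<and> row_finite L \<and>
     (\<forall>n. V n \<noteq> {} \<and> finite (V n)) \<and>
     (\<forall>n n'. n \<noteq> n' \<longrightarrow> V n \<inter> V n' = {}) \<and>
     vertices L = (\<Union>n. V n) \<and>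
     (\<forall>e\<in>blue L. \<exists>n. rg L e \<in> V n \<and> sr L e \<in> V (Suc n)) \<and>
     (\<forall>v\<in>vertices L. \<exists>e\<in>blue L. rg L e = v) \<and>
     (\<forall>v\<in>vertices L. (\<not> (\<exists>e\<in>blue L. sr L e = v)) \<longrightarrow> v \<in> V 0) \<and>
     (\<forall>v\<in>vertices L. \<exists>l. red_cycle L l \<and> isolated_cycle L l \<and> lies_on L v l) \<and>
     (\<forall>f\<in>red L. \<exists>n. rg L f \<in> V n \<and> sr L f \<in> V n)"

definition Fmap :: "'a two_graph \<Rightarrow> 'a \<Rightarrow> 'a" where
  "Fmap L e = (let f = (THE f. f \<in> red L \<and> sr L f = rg L e) in
     THE e'. e' \<in> blue L \<and> (\<exists>f'\<in>red L. sr L e' = rg L f' \<and> cp L f e = cp L e' f'))"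

definition orb :: "'a two_graph \<Rightarrow> 'a \<Rightarrow> nat" where
  "orb L e = (LEAST k. 0 < k \<and> (Fmap L ^^ k) e = e)"

definition Ord_n :: "'a two_graph \<Rightarrow> (nat \<Rightarrow> 'a set) \<Rightarrow> nat \<Rightarrow> nat" where
  "Ord_n L V n = Lcm {orb L e | e. e \<in> blue L \<and> rg L e \<in> V n}"

fun mseq :: "'a two_graph \<Rightarrow> (nat \<Rightarrow> 'a set) \<Rightarrow> nat \<Rightarrow> nat" where
  "mseq L V 0 = 0"
| "mseq L V (Suc n) = mseq L V n + n * Ord_n L V n"

definition is_automorphism :: "'a two_graph \<Rightarrow> ('a \<Rightarrow> 'a) \<Rightarrow> bool" where
  "is_automorphism L a \<longleftrightarrow> bij_betw a (Mor L) (Mor L) \<and>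
     (\<forall>l\<in>Mor L. dg L (a l) = dg L l \<and> rg L (a l) = a (rg L l) \<and> sr L (a l) = a (sr L l)) \<and>
     (\<forall>l\<in>Mor L. \<forall>m\<in>Mor L. sr L l = rg L m \<longrightarrow> a (cp L l m) = cp L (a l) (a m))"

text \<open>Infinite paths: degree-preserving functors Omega_2 \<rightarrow> Lambda; x m n is the
image of the morphism (m,n) of Omega_2 (m \<le> n); values off the domain are undefined.\<close>
type_synonym 'a ipath = "nat \<times> nat \<Rightarrow> nat \<times> nat \<Rightarrow> 'a"

definition inf_paths :: "'a two_graph \<Rightarrow> 'a ipath set" where
  "inf_paths L = {x.
     (\<forall>m n. m \<le> n \<longrightarrow> x m n \<in> Mor L \<and> dg L (x m n) = n - m) \<and>
     (\<forall>m n p. m \<le> n \<and> n \<le> p \<longrightarrow> sr L (x m n) = rg L (x n p) \<and> x m p = cp L (x m n) (x n p)) \<and>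
     (\<forall>m n. \<not> m \<le> n \<longrightarrow> x m n = undefined)}"

definition shift :: "nat \<times> nat \<Rightarrow> 'a ipath \<Rightarrow> 'a ipath" where
  "shift p x = (\<lambda>m n. x (m + p) (n + p))"

definition prange :: "'a ipath \<Rightarrow> 'a" where
  "prange x = x 0 0"

definition pconcat :: "'a two_graph \<Rightarrow> 'a \<Rightarrow> 'a ipath \<Rightarrow> 'a ipath" where
  "pconcat L l z = (THE y. y \<in> inf_paths L \<and> y 0 (dg L l) = l \<and> shift (dg L l) y = z)"

definition cyl :: "'a two_graph \<Rightarrow> 'a \<Rightarrow> 'a ipath set" where
  "cyl L l = {pconcat L l z | z. z \<in> inf_paths L \<and> prange z = sr L l}"

definition path_top :: "'a two_graph \<Rightarrow> 'a ipath topology" where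
  "path_top L = topology_generated_by {cyl L l | l. l \<in> Mor L}"

definition toZ :: "nat \<times> nat \<Rightarrow> int \<times> int" where
  "toZ p = (int (fst p), int (snd p))"

definition path_groupoid :: "'a two_graph \<Rightarrow> ('a ipath \<times> (int \<times> int) \<times> 'a ipath) set" where
  "path_groupoid L = {(x, k, y). x \<in> inf_paths L \<and> y \<in> inf_paths L \<and>
     (\<exists>l m. shift l x = shift m y \<and> k = toZ l - toZ m)}"

definition gcyl :: "'a two_graph \<Rightarrow> 'a \<Rightarrow> 'a \<Rightarrow> ('a ipath \<times> (int \<times> int) \<times> 'a ipath) set" where
  "gcyl L l m = {(pconcat L l z, toZ (dg L l) - toZ (dg L m), pconcat L m z) | z.
                  z \<in> inf_paths L \<and> prange z = sr L l}"

definition groupoid_top :: "'a two_graph \<Rightarrow> ('a ipath \<times> (int \<times> int) \<times> 'a ipath) topology" where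
  "groupoid_top L = topology_generated_by {gcyl L l m | l m. l \<in> Mor L \<and> m \<in> Mor L \<and> sr L l = sr L m}"

definition gmult :: "('a ipath \<times> (int \<times> int) \<times> 'a ipath) \<Rightarrow> ('a ipath \<times> (int \<times> int) \<times> 'a ipath) \<Rightarrow> ('a ipath \<times> (int \<times> int) \<times> 'a ipath)" where
  "gmult g h = (fst g, fst (snd g) + fst (snd h), snd (snd h))"

definition ginv :: "('a ipath \<times> (int \<times> int) \<times> 'a ipath) \<Rightarrow> ('a ipath \<times> (int \<times> int) \<times> 'a ipath)" where
  "ginv g = (snd (snd g), - fst (snd g), fst g)"

definition composable :: "('a ipath \<times> (int \<times> int) \<times> 'a ipath) \<Rightarrow> ('a ipath \<times> (int \<times> int) \<times> 'a ipath) \<Rightarrow> bool" where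
  "composable g h \<longleftrightarrow> snd (snd g) = fst h"

definition top_groupoid_aut :: "'a two_graph \<Rightarrow> (('a ipath \<times> (int \<times> int) \<times> 'a ipath) \<Rightarrow> ('a ipath \<times> (int \<times> int) \<times> 'a ipath)) \<Rightarrow> bool" where
  "top_groupoid_aut L phi \<longleftrightarrow>
     bij_betw phi (path_groupoid L) (path_groupoid L) \<and>
     (\<forall>g\<in>path_groupoid L. \<forall>h\<in>path_groupoid L.
        (composable g h \<longleftrightarrow> composable (phi g) (phi h)) \<and>
        (composable g h \<longrightarrow> phi (gmult g h) = gmult (phi g) (phi h))) \<and>
     (\<forall>g\<in>path_groupoid L. phi (ginv g) = ginv (phi g)) \<and>
     homeomorphic_map (groupoid_top L) (groupoid_top L) phi"

definition path_map :: "('a \<Rightarrow> 'a) \<Rightarrow> 'a ipath \<Rightarrow> 'a ipath" where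
  "path_map a x = (\<lambda>m n. if m \<le> n then a (x m n) else undefined)"

definition groupoid_map :: "('a \<Rightarrow> 'a) \<Rightarrow> ('a ipath \<times> (int \<times> int) \<times> 'a ipath) \<Rightarrow> ('a ipath \<times> (int \<times> int) \<times> 'a ipath)" where
  "groupoid_map a g = (path_map a (fst g), fst (snd g), path_map a (snd (snd g)))"

end

theory Submission
  imports Defs
begin

lemma pp_add_diff[simp]: "(p::nat\<times>nat) + q - p = q" by (cases p; cases q) simp
lemma pp_add_diff2[simp]: "(p::nat\<times>nat) \<le> q \<Longrightarrow> p + (q - p) = q" by (cases p; cases q) simp
lemma pp_le_add[simp]: "(p::nat\<times>nat) \<le> p + q" by (cases p; cases q) simp
lemma pp_cancel: "(p::nat\<times>nat) + q = p + q' \<Longrightarrow> q = q'" by (cases p; cases q; cases q') simp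
lemma pp_add0: "(p::nat\<times>nat) + q = p \<Longrightarrow> q = 0" by (cases p; cases q) (simp add: zero_prod_def)
lemma pp_add0': "(q::nat\<times>nat) + p = p \<Longrightarrow> q = 0" by (cases p; cases q) (simp add: zero_prod_def)

lemma homeo_generated:
  assumes f: "\<And>U. U \<in> S \<Longrightarrow> f ` U \<in> S" and g: "\<And>U. U \<in> S \<Longrightarrow> g ` U \<in> S"
    and gf: "\<And>x. x \<in> \<Union>S \<Longrightarrow> g (f x) = x" and fg: "\<And>x. x \<in> \<Union>S \<Longrightarrow> f (g x) = x"
  shows "homeomorphic_map (topology_generated_by S) (topology_generated_by S) f"
proof -
  have pre: "h -` U \<inter> \<Union>S = k ` U" if hk: "\<And>U. U \<in> S \<Longrightarrow> k ` U \<in> S"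
    "\<And>x. x \<in> \<Union>S \<Longrightarrow> k (h x) = x" "\<And>x. x \<in> \<Union>S \<Longrightarrow> h (k x) = x"
    "\<And>U. U \<in> S \<Longrightarrow> h ` U \<in> S" and U: "U \<in> S" for h k U
  proof
    show "h -` U \<inter> \<Union>S \<subseteq> k ` U"
    proof
      fix x assume x: "x \<in> h -` U \<inter> \<Union>S"
      then have "x = k (h x)" using hk(2) by auto
      then show "x \<in> k ` U" using x by auto
    qed
    show "k ` U \<subseteq> h -` U \<inter> \<Union>S"
    proof
      fix y assume "y \<in> k ` U"
      then obtain u where u: "u \<in> U" "y = k u" by auto
      have "y \<in> \<Union>S" using hk(1)[OF U] u by auto
      moreover have "h y = u" using hk(3) u U by auto
      ultimately show "y \<in> h -` U \<inter> \<Union>S" using u by auto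
    qed
  qed
  have cf: "continuous_map (topology_generated_by S) (topology_generated_by S) f"
  proof (rule continuous_on_generated_topo)
    fix U assume U: "U \<in> S"
    have "f -` U \<inter> topspace (topology_generated_by S) = g ` U"
      using pre[of g f U] g gf fg f U by simp
    then show "openin (topology_generated_by S) (f -` U \<inter> topspace (topology_generated_by S))"
      using g[OF U] by (simp add: topology_generated_by_Basis)
  next
    show "f ` topspace (topology_generated_by S) \<subseteq> \<Union>S" using f by auto
  qed
  have cg: "continuous_map (topology_generated_by S) (topology_generated_by S) g"
  proof (rule continuous_on_generated_topo)
    fix U assume U: "U \<in> S"
    have "g -` U \<inter> topspace (topology_generated_by S) = f ` U"
      using pre[of f g U] g gf fg f U by simp
    then show "openin (topology_generated_by S) (g -` U \<inter> topspace (topology_generated_by S))"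
      using f[OF U] by (simp add: topology_generated_by_Basis)
  next
    show "g ` topspace (topology_generated_by S) \<subseteq> \<Union>S" using g by auto
  qed
  show ?thesis unfolding homeomorphic_map_maps homeomorphic_maps_def
    using cf cg gf fg by auto
qed

locale tg =
  fixes L :: "'a two_graph"
  assumes tg: "is_2graph L"
begin

abbreviation "M \<equiv> Mor L"
abbreviation "r \<equiv> rg L"
abbreviation "s \<equiv> sr L"
abbreviation "c \<equiv> cp L"
abbreviation "d \<equiv> dg L"

lemma rs[simp]:
  assumes "l \<in> M"
  shows "r l \<in> M" "s l \<in> M" "r (r l) = r l" "s (r l) = r l" "r (s l) = s l" "s (s l) = s l"
    "c (r l) l = l" "c l (s l) = l"
  using tg assms unfolding is_2graph_def by auto

lemma comp[simp]:
  assumes "l \<in> M" "m \<in> M" "s l = r m"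
  shows "c l m \<in> M" "r (c l m) = r l" "s (c l m) = s m" "d (c l m) = d l + d m"
  using tg assms unfolding is_2graph_def by auto

lemma assoc:
  assumes "l \<in> M" "m \<in> M" "n \<in> M" "s l = r m" "s m = r n"
  shows "c (c l m) n = c l (c m n)"
  using tg assms unfolding is_2graph_def by blast

lemma fact_ex1:
  assumes "l \<in> M" "d l = p + q"
  shows "\<exists>!mn. fst mn \<in> M \<and> snd mn \<in> M \<and> d (fst mn) = p \<and> d (snd mn) = q \<and>
               s (fst mn) = r (snd mn) \<and> c (fst mn) (snd mn) = l"
  using tg assms unfolding is_2graph_def by blast

lemma fact_uniq:
  assumes "a \<in> M" "b \<in> M" "a' \<in> M" "b' \<in> M" "s a = r b" "s a' = r b'"
    "c a b = c a' b'" "d a = d a'"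
  shows "a = a' \<and> b = b'"
proof -
  have "d a + d b = d a' + d b'"
    using comp(4)[of a b] comp(4)[of a' b'] assms by (metis (no_types))
  then have "d a + d b = d a + d b'" using assms by simp
  then have dd: "d b = d b'" by (metis pp_cancel)
  have "d (c a b) = d a + d b" by (rule comp(4)[OF assms(1,2,5)])
  from fact_ex1[OF comp(1)[of a b] this] assms(1-2,5)
  obtain u where u: "\<forall>mn. (fst mn \<in> M \<and> snd mn \<in> M \<and> d (fst mn) = d a \<and> d (snd mn) = d b \<and>
               s (fst mn) = r (snd mn) \<and> c (fst mn) (snd mn) = c a b) \<longrightarrow> mn = u"
    by metis
  have "(a, b) = u" using u assms by auto
  moreover have "(a', b') = u" using u[rule_format, of "(a',b')"] assms dd by auto
  ultimately show ?thesis by auto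
qed

lemma deg_r[simp]: "l \<in> M \<Longrightarrow> d (r l) = 0"
  using comp(4)[of "r l" l] rs[of l] pp_add0' by metis

lemma deg_s[simp]: "l \<in> M \<Longrightarrow> d (s l) = 0"
  using comp(4)[of l "s l"] rs[of l] pp_add0 by metis

lemma deg0_id:
  assumes "l \<in> M" "d l = 0"
  shows "r l = l" "s l = l"
proof -
  have "r l = l \<and> l = l" using fact_uniq[of "r l" l l "s l"] assms by simp
  then show "r l = l" by simp
  have "r l = l \<and> l = s l" using fact_uniq[of "r l" l l "s l"] assms by simp
  then show "s l = l" by simp
qed

definition pre :: "'a \<Rightarrow> nat\<times>nat \<Rightarrow> 'a" where
  "pre l p = fst (THE mn. fst mn \<in> M \<and> snd mn \<in> M \<and> d (fst mn) = p \<and> d (snd mn) = d l - p \<and>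
               s (fst mn) = r (snd mn) \<and> c (fst mn) (snd mn) = l)"
definition suf :: "'a \<Rightarrow> nat\<times>nat \<Rightarrow> 'a" where
  "suf l p = snd (THE mn. fst mn \<in> M \<and> snd mn \<in> M \<and> d (fst mn) = p \<and> d (snd mn) = d l - p \<and>
               s (fst mn) = r (snd mn) \<and> c (fst mn) (snd mn) = l)"

lemma split:
  assumes "l \<in> M" "p \<le> d l"
  shows "pre l p \<in> M" "suf l p \<in> M" "d (pre l p) = p" "d (suf l p) = d l - p"
    "s (pre l p) = r (suf l p)" "c (pre l p) (suf l p) = l"
proof -
  have "d l = p + (d l - p)" using assms by simp
  from theI'[OF fact_ex1[OF assms(1) this]]
  show "pre l p \<in> M" "suf l p \<in> M" "d (pre l p) = p" "d (suf l p) = d l - p"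
    "s (pre l p) = r (suf l p)" "c (pre l p) (suf l p) = l"
    unfolding pre_def suf_def by auto
qed

lemma split_r: "l \<in> M \<Longrightarrow> p \<le> d l \<Longrightarrow> r (pre l p) = r l"
  using split[of l p] comp(2)[of "pre l p" "suf l p"] by metis
lemma split_s: "l \<in> M \<Longrightarrow> p \<le> d l \<Longrightarrow> s (suf l p) = s l"
  using split[of l p] comp(3)[of "pre l p" "suf l p"] by metis

lemma split_uniq:
  assumes "a \<in> M" "b \<in> M" "s a = r b"
  shows "pre (c a b) (d a) = a" "suf (c a b) (d a) = b"
proof -
  have le: "d a \<le> d (c a b)" using assms by simp
  note sp = split[OF comp(1)[OF assms] le]
  have "pre (c a b) (d a) = a \<and> suf (c a b) (d a) = b"
    using fact_uniq[of "pre (c a b) (d a)" "suf (c a b) (d a)" a b] sp assms by auto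
  then show "pre (c a b) (d a) = a" "suf (c a b) (d a) = b" by auto
qed

lemma cancel_left:
  assumes "a \<in> M" "b \<in> M" "b' \<in> M" "s a = r b" "s a = r b'" "c a b = c a b'"
  shows "b = b'"
  using fact_uniq[of a b a b'] assms by auto

lemma cancel_right:
  assumes "a \<in> M" "b \<in> M" "a' \<in> M" "s a = r b" "s a' = r b" "c a b = c a' b" "d a = d a'"
  shows "a = a'"
  using fact_uniq[of a b a' b] assms by auto

end

lemma pp_le_add2[simp]: "(q::nat\<times>nat) \<le> p + q" by (cases p; cases q) (simp add: less_eq_prod_def)
lemma pp_diff_mono: "(a::nat\<times>nat) \<le> b \<Longrightarrow> b \<le> D \<Longrightarrow> b - a \<le> D - a"
  by (cases a; cases b; cases D) (auto simp: less_eq_prod_def)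
lemma pp_add_le_iff[simp]: "(i::nat\<times>nat) + D \<le> j + D \<longleftrightarrow> i \<le> j"
  by (cases i; cases j; cases D) (auto simp: less_eq_prod_def)
lemma pp_add_le_iff2[simp]: "(D::nat\<times>nat) + i \<le> D + j \<longleftrightarrow> i \<le> j"
  by (cases i; cases j; cases D) (auto simp: less_eq_prod_def)
lemma pp_three: "(a::nat\<times>nat) \<le> b \<Longrightarrow> b \<le> e \<Longrightarrow> a + (b - a) + (e - b) = e"
  by (cases a; cases b; cases e) (auto simp: less_eq_prod_def)
lemma pp_zero_le[simp]: "(0::nat\<times>nat) \<le> x" by (cases x) (simp add: less_eq_prod_def zero_prod_def)
lemma pp_add_diff3[simp]: "(D::nat\<times>nat) + j - (D + i) = j - i"
  by (cases i; cases j; cases D) auto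
lemma pp_add_diff4[simp]: "(j::nat\<times>nat) + D - (i + D) = j - i"
  by (cases i; cases j; cases D) auto
lemma pp_diff_diff: "(a::nat\<times>nat) \<le> b \<Longrightarrow> b \<le> D \<Longrightarrow> D - a - (b - a) = D - b"
  by (cases a; cases b; cases D) (auto simp: less_eq_prod_def)
lemma pp_comm: "(j::nat\<times>nat) + D = D + j" by (simp add: add.commute)

context tg begin

definition seg :: "'a \<Rightarrow> nat\<times>nat \<Rightarrow> nat\<times>nat \<Rightarrow> 'a" where
  "seg X a b = pre (suf X a) (b - a)"

lemma seg_char:
  assumes "A \<in> M" "C \<in> M" "B \<in> M" "s A = r C" "s C = r B"
  shows "seg (c A (c C B)) (d A) (d A + d C) = C"
proof -
  have "suf (c A (c C B)) (d A) = c C B"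
    using split_uniq(2)[of A "c C B"] assms by simp
  then show ?thesis unfolding seg_def using split_uniq(1)[of C B] assms by simp
qed

lemma seg_basic:
  assumes "X \<in> M" "a \<le> b" "b \<le> d X"
  shows "seg X a b \<in> M" "d (seg X a b) = b - a"
    "pre X a \<in> M" "suf (suf X a) (b - a) \<in> M" "s (pre X a) = r (seg X a b)"
    "s (seg X a b) = r (suf (suf X a) (b - a))"
    "X = c (pre X a) (c (seg X a b) (suf (suf X a) (b - a)))"
    "d (pre X a) = a" "d (suf (suf X a) (b - a)) = d X - b"
proof -
  have aX: "a \<le> d X" using assms order_trans by blast
  note S1 = split[OF assms(1) aX]
  have le: "b - a \<le> d (suf X a)" using S1(4) pp_diff_mono assms by simp
  note S2 = split[OF S1(2) le]
  show "seg X a b \<in> M" "d (seg X a b) = b - a" "pre X a \<in> M" "suf (suf X a) (b - a) \<in> M"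
    "s (seg X a b) = r (suf (suf X a) (b - a))" "d (pre X a) = a"
    unfolding seg_def using S1 S2 by auto
  show "d (suf (suf X a) (b - a)) = d X - b" using S1 S2 pp_diff_diff assms by simp
  show "s (pre X a) = r (seg X a b)" unfolding seg_def using S1 S2 split_r[OF S1(2) le] by simp
  show "X = c (pre X a) (c (seg X a b) (suf (suf X a) (b - a)))"
    unfolding seg_def using S1 S2 by simp
qed

lemma seg_comp:
  assumes "X \<in> M" "a \<le> b" "b \<le> e" "e \<le> d X"
  shows "seg X a e = c (seg X a b) (seg X b e)" "s (seg X a b) = r (seg X b e)"
proof -
  have bX: "b \<le> d X" using assms order_trans by blast
  note B = seg_basic[OF assms(1,2) bX]
  define A where "A = pre X a"
  define C1 where "C1 = seg X a b"
  define Z where "Z = suf (suf X a) (b - a)"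
  have dZ: "d Z = d X - b" unfolding Z_def using B by simp
  have eZ: "e - b \<le> d Z" using dZ pp_diff_mono assms by simp
  note SZ = split[OF B(4)[folded Z_def] eZ]
  define C2 where "C2 = pre Z (e - b)"
  define Bt where "Bt = suf Z (e - b)"
  have X1: "X = c A (c C1 (c C2 Bt))" using B SZ unfolding A_def C1_def C2_def Bt_def Z_def by simp
  have mem: "A \<in> M" "C1 \<in> M" "C2 \<in> M" "Bt \<in> M" using B SZ unfolding A_def C1_def C2_def Bt_def Z_def
    by auto
  have cs: "s A = r C1" "s C1 = r C2" "s C2 = r Bt"
    using B SZ split_r[OF B(4)[folded Z_def] eZ] unfolding A_def C1_def C2_def Bt_def Z_def by auto
  have dd: "d A = a" "d C1 = b - a" "d C2 = e - b" using B SZ unfolding A_def C1_def C2_def Z_def by auto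
  have X2: "X = c (c A C1) (c C2 Bt)" using X1 assoc mem cs by simp
  have "seg X (d (c A C1)) (d (c A C1) + d C2) = C2"
    using seg_char[of "c A C1" C2 Bt] X2 mem cs by simp
  then have s2: "seg X b e = C2" using dd mem cs assms pp_three[of a b e] by simp
  have X3: "X = c A (c (c C1 C2) Bt)" using X1 assoc mem cs by simp
  have "seg X (d A) (d A + d (c C1 C2)) = c C1 C2"
    using seg_char[of A "c C1 C2" Bt] X3 mem cs by simp
  moreover have "a + (b - a + (e - b)) = e" using pp_three[OF assms(2,3)] by (simp only: add.assoc)
  then have "d A + d (c C1 C2) = e" using dd mem cs by simp
  ultimately have s3: "seg X a e = c C1 C2" using dd by simp
  show "seg X a e = c (seg X a b) (seg X b e)" using s2 s3 C1_def by simp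
  show "s (seg X a b) = r (seg X b e)" using s2 cs C1_def by simp
qed

lemma seg_left:
  assumes "X \<in> M" "Y \<in> M" "s X = r Y" "a \<le> b" "b \<le> d X"
  shows "seg (c X Y) a b = seg X a b"
proof -
  note B = seg_basic[OF assms(1,4,5)]
  let ?A = "pre X a" and ?C = "seg X a b" and ?B = "suf (suf X a) (b - a)"
  have m: "?A \<in> M" "?C \<in> M" "?B \<in> M" "s ?A = r ?C" "s ?C = r ?B" using B by auto
  have sB: "s ?B = r Y" using assms B(7) m comp(3)[of ?C ?B] comp(3)[of ?A "c ?C ?B"] by simp
  have "c X Y = c (c ?A (c ?C ?B)) Y" using B(7) by simp
  also have "\<dots> = c ?A (c (c ?C ?B) Y)" using assoc[of ?A "c ?C ?B" Y] m sB assms by simp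
  also have "\<dots> = c ?A (c ?C (c ?B Y))" using assoc[of ?C ?B Y] m sB assms by simp
  finally have "c X Y = c ?A (c ?C (c ?B Y))" .
  moreover have "?B \<in> M" "s ?B = r Y" using m sB by auto
  ultimately show ?thesis using seg_char[of ?A ?C "c ?B Y"] B assms by simp
qed

lemma seg_right:
  assumes "X \<in> M" "Y \<in> M" "s X = r Y" "a \<le> b" "b \<le> d Y"
  shows "seg (c X Y) (d X + a) (d X + b) = seg Y a b"
proof -
  note B = seg_basic[OF assms(2,4,5)]
  let ?A = "pre Y a" and ?C = "seg Y a b" and ?B = "suf (suf Y a) (b - a)"
  have aY: "a \<le> d Y" using assms order_trans by blast
  have rA: "r ?A = r Y" using split_r[OF assms(2) aY] .
  have m: "?A \<in> M" "?C \<in> M" "?B \<in> M" "s ?A = r ?C" "s ?C = r ?B" using B by auto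
  have "c X Y = c X (c ?A (c ?C ?B))" using B(7) by simp
  also have "\<dots> = c (c X ?A) (c ?C ?B)" using assoc[of X ?A "c ?C ?B"] m rA assms by simp
  finally have "c X Y = c (c X ?A) (c ?C ?B)" .
  moreover have "d (c X ?A) = d X + a" using B assms rA by simp
  ultimately show ?thesis using seg_char[of "c X ?A" ?C ?B] B assms rA
    by (simp add: add.assoc)
qed

lemma seg_all: "X \<in> M \<Longrightarrow> seg X 0 (d X) = X"
  using seg_char[of "r X" X "s X"] by simp

end

context tg begin
definition "ipath x \<longleftrightarrow> x \<in> inf_paths L"

lemma ip:
  assumes "x \<in> inf_paths L"
  shows "\<And>m n. m \<le> n \<Longrightarrow> x m n \<in> M" "\<And>m n. m \<le> n \<Longrightarrow> d (x m n) = n - m"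
    "\<And>m n p. m \<le> n \<Longrightarrow> n \<le> p \<Longrightarrow> s (x m n) = r (x n p)"
    "\<And>m n p. m \<le> n \<Longrightarrow> n \<le> p \<Longrightarrow> x m p = c (x m n) (x n p)"
    "\<And>m n. \<not> m \<le> n \<Longrightarrow> x m n = undefined"
  using assms unfolding inf_paths_def by auto

lemma ip_seg:
  assumes "x \<in> inf_paths L" "m \<le> n" "n \<le> N"
  shows "x m n = seg (x 0 N) m n"
proof -
  have mN: "m \<le> N" using assms order_trans by blast
  have "x 0 N = c (x 0 m) (x m N)" using ip(4)[OF assms(1), of 0 m N] mN by simp
  also have "x m N = c (x m n) (x n N)" using ip(4)[OF assms(1) assms(2,3)] .
  finally have e: "x 0 N = c (x 0 m) (c (x m n) (x n N))" .
  have mm: "x 0 m \<in> M" "x m n \<in> M" "x n N \<in> M" "s (x 0 m) = r (x m n)" "s (x m n) = r (x n N)"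
    using ip(1,3)[OF assms(1)] assms by auto
  have "d (x 0 m) = m" "d (x m n) = n - m" using ip(2)[OF assms(1)] assms by auto
  then have "seg (x 0 N) m (m + (n - m)) = x m n"
    using seg_char[OF mm] e by simp
  then show ?thesis using assms by simp
qed

lemma ip_r: "x \<in> inf_paths L \<Longrightarrow> r (x 0 n) = x 0 0"
proof -
  assume x: "x \<in> inf_paths L"
  have a: "x 0 0 \<in> M" "x 0 n \<in> M" "s (x 0 0) = r (x 0 n)" "x 0 n = c (x 0 0) (x 0 n)"
    using ip(1)[OF x, of 0 0] ip(1)[OF x, of 0 n] ip(3)[OF x, of 0 0 n] ip(4)[OF x, of 0 0 n] by auto
  have "d (x 0 0) = 0" using ip(2)[OF x, of 0 0] by simp
  then have "r (x 0 0) = x 0 0" using deg0_id a by blast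
  then show ?thesis using comp(2)[OF a(1-3)] a(4) by simp
qed

lemma ip_uniq:
  assumes "y \<in> inf_paths L" "y' \<in> inf_paths L" "y 0 D = y' 0 D" "shift D y = shift D y'"
  shows "y = y'"
proof (intro ext)
  fix m n :: "nat \<times> nat"
  show "y m n = y' m n"
  proof (cases "m \<le> n")
    case False then show ?thesis using ip(5) assms by metis
  next
    case True
    define N where "N = sup n D"
    have nN: "n \<le> N" "D \<le> N" unfolding N_def by auto
    have "y D N = y' D N"
    proof -
      have "shift D y 0 (N - D) = shift D y' 0 (N - D)" using assms by simp
      then show ?thesis using nN unfolding shift_def by (simp add: add.commute)
    qed
    then have "y 0 N = y' 0 N" using ip(4)[OF assms(1), of 0 D N] ip(4)[OF assms(2), of 0 D N] nN assms
      by simp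
    note e = this
    have "y m n = seg (y 0 N) m n" by (rule ip_seg[OF assms(1) True nN(1)])
    also have "\<dots> = seg (y' 0 N) m n" using e by simp
    also have "\<dots> = y' m n" by (rule ip_seg[OF assms(2) True nN(1), symmetric])
    finally show ?thesis .
  qed
qed

lemma ip_exists:
  assumes l: "l \<in> M" and z: "z \<in> inf_paths L" and rz: "z 0 0 = s l"
  shows "\<exists>y\<in>inf_paths L. y 0 (d l) = l \<and> shift (d l) y = z"
proof -
  define D where "D = d l"
  define W where "W n = c l (z 0 n)" for n
  have zr: "r (z 0 n) = s l" for n using ip_r[OF z] rz by simp
  have zm: "z 0 n \<in> M" "d (z 0 n) = n" for n using ip(1,2)[OF z, of 0 n] by auto
  have W: "W n \<in> M" "d (W n) = D + n" for n
    unfolding W_def D_def using zm[of n] l zr[of n] by auto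
  have mono: "seg (W n') a b = seg (W n) a b" if "n \<le> n'" "a \<le> b" "b \<le> D + n" for n n' a b
  proof -
    have z3: "z 0 n' = c (z 0 n) (z n n')" "s (z 0 n) = r (z n n')" "z n n' \<in> M"
      using ip(1)[OF z, of n n'] ip(3)[OF z, of 0 n n'] ip(4)[OF z, of 0 n n'] that by auto
    have "W n' = c (W n) (z n n')" unfolding W_def
      using z3 assoc[of l "z 0 n" "z n n'"] l zr zm by simp
    moreover have "s (W n) = r (z n n')" unfolding W_def using z3 l zm zr by simp
    ultimately show ?thesis using seg_left[of "W n" "z n n'" a b] W z3 that by simp
  qed
  define y where "y = (\<lambda>m n. if m \<le> n then seg (W n) m n else undefined)"
  have y_in: "y \<in> inf_paths L"
    unfolding inf_paths_def mem_Collect_eq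
  proof (intro conjI allI impI)
    fix m n :: "nat \<times> nat" assume mn: "m \<le> n"
    show "y m n \<in> M" "d (y m n) = n - m" unfolding y_def using seg_basic[OF W(1), of m n n] mn W(2)
      by auto
  next
    fix m n p :: "nat \<times> nat" assume mnp: "m \<le> n \<and> n \<le> p"
    then have mp: "m \<le> p" by auto
    have "y m n = seg (W p) m n" unfolding y_def using mono[of n p m n] mnp by simp
    moreover have "y n p = seg (W p) n p" "y m p = seg (W p) m p" unfolding y_def using mnp mp by auto
    ultimately show "s (y m n) = r (y n p)" "y m p = c (y m n) (y n p)"
      using seg_comp[OF W(1), of m n p p] mnp W(2) by auto
  next
    fix m n :: "nat \<times> nat" assume "\<not> m \<le> n" then show "y m n = undefined" unfolding y_def by simp
  qed
  have y0: "y 0 D = l"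
  proof -
    have "y 0 D = seg (W D) 0 D" unfolding y_def by simp
    also have "\<dots> = seg l 0 D" unfolding W_def using seg_left[of l "z 0 D" 0 D] zm zr l D_def by simp
    also have "\<dots> = l" using seg_all l D_def by simp
    finally show ?thesis .
  qed
  have ysh: "shift D y = z"
  proof (intro ext)
    fix i j :: "nat \<times> nat"
    show "shift D y i j = z i j"
    proof (cases "i \<le> j")
      case False then show ?thesis unfolding shift_def y_def using ip(5)[OF z] by simp
    next
      case True
      have "shift D y i j = seg (W (j + D)) (i + D) (j + D)" unfolding shift_def y_def using True by simp
      also have "\<dots> = seg (W j) (D + i) (D + j)" using mono[of j "j + D" "i + D" "j + D"] True
        by (simp add: add.commute)
      also have "\<dots> = seg (z 0 j) i j" unfolding W_def D_def
        using seg_right[of l "z 0 j" i j] l zr zm True by simp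
      also have "\<dots> = z i j" by (rule ip_seg[OF z True order_refl, symmetric])
      finally show ?thesis .
    qed
  qed
  show ?thesis using y_in y0 ysh D_def by auto
qed

lemma pconcat:
  assumes "l \<in> M" "z \<in> inf_paths L" "z 0 0 = s l"
  shows "pconcat L l z \<in> inf_paths L" "pconcat L l z 0 (d l) = l" "shift (d l) (pconcat L l z) = z"
proof -
  have "\<exists>!y. y \<in> inf_paths L \<and> y 0 (d l) = l \<and> shift (d l) y = z"
  proof (rule ex_ex1I)
    show "\<exists>y. y \<in> inf_paths L \<and> y 0 (d l) = l \<and> shift (d l) y = z" using ip_exists[OF assms] by blast
  next
    fix y y' assume a: "y \<in> inf_paths L \<and> y 0 (d l) = l \<and> shift (d l) y = z"
      and b: "y' \<in> inf_paths L \<and> y' 0 (d l) = l \<and> shift (d l) y' = z"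
    have "y 0 (d l) = y' 0 (d l)" "shift (d l) y = shift (d l) y'" using a b by simp_all
    then show "y = y'" using ip_uniq[of y y' "d l"] a b by blast
  qed
  note t = theI'[OF this, folded pconcat_def]
  show "pconcat L l z \<in> inf_paths L" using t by (elim conjE)
  show "pconcat L l z 0 (d l) = l" using t by (elim conjE)
  show "shift (d l) (pconcat L l z) = z" using t by (elim conjE)
qed

lemma pconcat_eq:
  assumes "l \<in> M" "z \<in> inf_paths L" "z 0 0 = s l" "y \<in> inf_paths L" "y 0 (d l) = l" "shift (d l) y = z"
  shows "pconcat L l z = y"
proof -
  note p = pconcat[OF assms(1-3)]
  have "pconcat L l z 0 (d l) = y 0 (d l)" "shift (d l) (pconcat L l z) = shift (d l) y"
    using p assms by simp_all
  then show ?thesis using ip_uniq[of "pconcat L l z" y "d l"] p(1) assms(4) by blast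
qed

end

lemma pp_01_le: "fst (x::nat\<times>nat) = 0 \<Longrightarrow> x \<noteq> 0 \<Longrightarrow> (0,1) \<le> x"
  by (cases x) (auto simp: less_eq_prod_def zero_prod_def)
lemma pp_01_diff: "fst (x::nat\<times>nat) = 0 \<Longrightarrow> x \<noteq> 0 \<Longrightarrow> x - (x - (0,1)) = (0,1)"
  by (cases x) (auto simp: zero_prod_def)
lemma pp_01_ne: "(y::nat\<times>nat) + (0,1) \<noteq> 0"
  by (cases y) (auto simp: zero_prod_def)
lemma pp_fst0: "(a::nat\<times>nat) + b = x \<Longrightarrow> fst x = 0 \<Longrightarrow> fst b = 0"
  by (cases a; cases b) auto
lemma pp_fst0': "(a::nat\<times>nat) + b = x \<Longrightarrow> fst x = 0 \<Longrightarrow> fst a = 0"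
  by (cases a; cases b) auto

locale brat =
  fixes L :: "'a two_graph" and V :: "nat \<Rightarrow> 'a set"
  assumes br: "rank2_bratteli L V"
begin

sublocale tg L using br unfolding rank2_bratteli_def by unfold_locales simp

lemma rowfin: "row_finite L" using br unfolding rank2_bratteli_def by simp
lemma Vfin: "finite (V n)" using br unfolding rank2_bratteli_def by simp
lemma Vdisj: "v \<in> V n \<Longrightarrow> v \<in> V n' \<Longrightarrow> n = n'" using br unfolding rank2_bratteli_def by blast
lemma Vunion: "vertices L = (\<Union>n. V n)" using br unfolding rank2_bratteli_def by simp
lemma blue_lev: "e \<in> blue L \<Longrightarrow> \<exists>n. r e \<in> V n \<and> s e \<in> V (Suc n)"
  using br unfolding rank2_bratteli_def by simp
lemma nosrc: "v \<in> vertices L \<Longrightarrow> \<exists>e\<in>blue L. r e = v"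
  using br unfolding rank2_bratteli_def by simp
lemma cyc: "v \<in> vertices L \<Longrightarrow> \<exists>l. red_cycle L l \<and> isolated_cycle L l \<and> lies_on L v l"
  using br unfolding rank2_bratteli_def by simp
lemma red_lev: "f \<in> red L \<Longrightarrow> \<exists>n. r f \<in> V n \<and> s f \<in> V n"
  using br unfolding rank2_bratteli_def by simp

lemma vert_iff: "v \<in> vertices L \<longleftrightarrow> v \<in> M \<and> d v = 0" unfolding vertices_def by simp
lemma V_vert: "v \<in> V n \<Longrightarrow> v \<in> vertices L" using Vunion by auto
lemma V_M: "v \<in> V n \<Longrightarrow> v \<in> M" using V_vert vert_iff by auto
lemma V_d: "v \<in> V n \<Longrightarrow> d v = 0" using V_vert vert_iff by auto
lemma vert_rs: "v \<in> vertices L \<Longrightarrow> r v = v \<and> s v = v" using deg0_id vert_iff by auto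
lemma r_vert: "l \<in> M \<Longrightarrow> r l \<in> vertices L" using vert_iff by simp
lemma s_vert: "l \<in> M \<Longrightarrow> s l \<in> vertices L" using vert_iff by simp
lemma vert_lev: "v \<in> vertices L \<Longrightarrow> \<exists>n. v \<in> V n" using Vunion by auto

definition lev :: "'a \<Rightarrow> nat" where "lev v = (THE n. v \<in> V n)"
lemma lev: "v \<in> V n \<Longrightarrow> lev v = n" unfolding lev_def using Vdisj by blast
lemma lev_in: "v \<in> vertices L \<Longrightarrow> v \<in> V (lev v)" using vert_lev lev by metis

lemma red_M: "f \<in> red L \<Longrightarrow> f \<in> M \<and> d f = (0,1)" unfolding red_def by simp
lemma blue_M: "e \<in> blue L \<Longrightarrow> e \<in> M \<and> d e = (1,0)" unfolding blue_def by simp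

lemma red_same: "f \<in> red L \<Longrightarrow> r f \<in> V n \<longleftrightarrow> s f \<in> V n"
  using red_lev Vdisj by metis

lemma blue_s_lev: "e \<in> blue L \<Longrightarrow> r e \<in> V n \<Longrightarrow> s e \<in> V (Suc n)"
  using blue_lev Vdisj by metis

lemma red_in_uniq:
  assumes v: "v \<in> vertices L" and f: "f \<in> red L" "r f = v" and g: "g \<in> red L" "r g = v"
  shows "f = g"
proof -
  obtain l where rc: "red_cycle L l" and iso: "isolated_cycle L l" and lo: "lies_on L v l"
    using cyc[OF v] by blast
  have lM: "l \<in> M" and dl: "d l \<noteq> 0" "fst (d l) = 0" and rsl: "r l = s l"
    using rc unfolding red_cycle_def is_cycle_def by auto
  obtain l1 l2 where fa: "factors L l l1 l2" and sl1: "s l1 = v" using lo unfolding lies_on_def by blast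
  obtain k1 k2 where ka: "factors L l k1 k2" "s k1 = v" "d k2 \<noteq> 0"
  proof (cases "d l2 = 0")
    case False then show ?thesis using that fa sl1 by blast
  next
    case True
    have l12: "l1 \<in> M" "l2 \<in> M" "s l1 = r l2" "l = c l1 l2" using fa unfolding factors_def by auto
    have "r l2 = l2" using deg0_id True l12 by simp
    then have "s l1 = l2" using l12 by simp
    then have "l = c l1 (s l1)" using l12 by simp
    then have "l = l1" using rs(8)[of l1] l12(1) by metis
    then have "s (r l) = v" using sl1 rsl lM rs(4)[of l1] by simp
    moreover have "factors L l (r l) l" unfolding factors_def using lM by simp
    ultimately show ?thesis using that dl by blast
  qed
  have k: "k1 \<in> M" "k2 \<in> M" "s k1 = r k2" "l = c k1 k2" using ka unfolding factors_def by auto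
  have dsum: "d k1 + d k2 = d l" using k by simp
  have fk2: "fst (d k2) = 0" using pp_fst0[OF dsum dl(2)] .
  have le: "(0,1) \<le> d k2" using pp_01_le[OF fk2 ka(3)] .
  define h where "h = pre k2 (0,1)"
  define t where "t = suf k2 (0,1)"
  note sp = split[OF k(2) le]
  have h: "h \<in> M" "d h = (0,1)" "r h = v" using sp split_r[OF k(2) le] ka(2) k(3) unfolding h_def by auto
  have t: "t \<in> M" "s h = r t" "k2 = c h t" using sp unfolding h_def t_def by auto
  define P where "P = c k1 h"
  have P: "P \<in> M" "s P = r t" "l = c P t" "d P \<noteq> 0" "r P = r l"
    unfolding P_def using k h t assoc[of k1 h t] pp_01_ne by auto
  have "factors L l P t" unfolding factors_def using P t by simp
  then have iso1: "{m \<in> M. r m = r l \<and> d m = d P} - {P} = {}"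
    using iso P(4) unfolding isolated_cycle_def by blast
  have eqh: "x = h" if x: "x \<in> red L" "r x = v" for x
  proof -
    have xm: "x \<in> M" "d x = (0,1)" using red_M x by auto
    have "c k1 x \<in> M" "r (c k1 x) = r l" "d (c k1 x) = d P"
      using k xm x h P ka(2) unfolding P_def by auto
    then have "c k1 x = P" using iso1 by blast
    then show ?thesis using cancel_left[of k1 x h] k xm x h ka(2) unfolding P_def by simp
  qed
  show ?thesis using eqh f g by metis
qed

lemma red_out_ex:
  assumes v: "v \<in> vertices L"
  shows "\<exists>f\<in>red L. s f = v"
proof -
  obtain l where rc: "red_cycle L l" and lo: "lies_on L v l"
    using cyc[OF v] by blast
  have lM: "l \<in> M" and dl: "d l \<noteq> 0" "fst (d l) = 0" and rsl: "r l = s l"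
    using rc unfolding red_cycle_def is_cycle_def by auto
  obtain l1 l2 where fa: "factors L l l1 l2" and sl1: "s l1 = v" using lo unfolding lies_on_def by blast
  have l12: "l1 \<in> M" "l2 \<in> M" "s l1 = r l2" "l = c l1 l2" using fa unfolding factors_def by auto
  obtain k where k: "k \<in> M" "s k = v" "d k \<noteq> 0" "fst (d k) = 0"
  proof (cases "d l1 = 0")
    case False
    have "d l1 + d l2 = d l" using l12 by simp
    then show ?thesis using that l12 sl1 False pp_fst0'[OF _ dl(2)] by blast
  next
    case True
    have "r l1 = l1" "s l1 = l1" using deg0_id True l12 by auto
    then have "r l = v" using l12 sl1 comp(2)[of l1 l2] by simp
    then show ?thesis using that lM dl rsl by simp
  qed
  have le: "d k - (0,1) \<le> d k" by (cases "d k") (simp add: less_eq_prod_def)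
  note sp = split[OF k(1) le]
  have "d (suf k (d k - (0,1))) = (0,1)" using sp pp_01_diff k by simp
  moreover have "s (suf k (d k - (0,1))) = v" using split_s[OF k(1) le] k by simp
  ultimately show ?thesis using sp unfolding red_def by auto
qed

definition "Rn n = {f \<in> red L. r f \<in> V n}"

lemma Rn_facts:
  shows "finite (Rn n)" "inj_on s (Rn n)" "r ` Rn n = V n" "s ` Rn n = V n"
proof -
  have inj: "inj_on r (Rn n)"
    unfolding inj_on_def Rn_def using red_in_uniq V_vert by blast
  have im: "r ` Rn n \<subseteq> V n" unfolding Rn_def by auto
  show fin: "finite (Rn n)" using inj_on_finite[OF inj im Vfin] .
  have sim: "s ` Rn n = V n"
  proof
    show "s ` Rn n \<subseteq> V n" unfolding Rn_def using red_same by auto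
    show "V n \<subseteq> s ` Rn n"
    proof
      fix v assume v: "v \<in> V n"
      obtain f where f: "f \<in> red L" "s f = v" using red_out_ex V_vert v by blast
      then have "f \<in> Rn n" unfolding Rn_def using red_same v by auto
      then show "v \<in> s ` Rn n" using f by force
    qed
  qed
  show "s ` Rn n = V n" by (rule sim)
  have c1: "card (Rn n) \<le> card (V n)" using card_inj_on_le[OF inj im Vfin] .
  have c2: "card (V n) \<le> card (Rn n)" using card_image_le[OF fin, of s] sim by simp
  have cc: "card (s ` Rn n) = card (Rn n)" using c1 c2 sim by simp
  show "inj_on s (Rn n)" using eq_card_imp_inj_on[OF fin cc] .
  have "card (r ` Rn n) = card (V n)" using card_image[OF inj] c1 c2 by simp
  then show "r ` Rn n = V n" using card_subset_eq[OF Vfin im] by simp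
qed

lemma red_out_uniq:
  assumes "f \<in> red L" "g \<in> red L" "s f = s g"
  shows "f = g"
proof -
  obtain n where n: "r f \<in> V n" "s f \<in> V n" using red_lev assms(1) by blast
  have "f \<in> Rn n" "g \<in> Rn n" unfolding Rn_def using assms n red_same by auto
  then show ?thesis using Rn_facts(2) assms(3) unfolding inj_on_def by blast
qed

lemma red_in_ex:
  assumes "v \<in> vertices L" shows "\<exists>f\<in>red L. r f = v"
proof -
  obtain n where "v \<in> V n" using vert_lev assms by blast
  then show ?thesis using Rn_facts(3)[of n] unfolding Rn_def by force
qed

definition "redout v = (THE f. f \<in> red L \<and> s f = v)"
definition "redin v = (THE f. f \<in> red L \<and> r f = v)"

lemma redout: "v \<in> vertices L \<Longrightarrow> redout v \<in> red L \<and> s (redout v) = v"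
proof -
  assume v: "v \<in> vertices L"
  then obtain f where f: "f \<in> red L" "s f = v" using red_out_ex by blast
  have "redout v = f" unfolding redout_def
    by (rule the_equality) (use f red_out_uniq in auto)
  then show ?thesis using f by simp
qed
lemma redout_eq: "f \<in> red L \<Longrightarrow> redout (s f) = f"
  using redout[of "s f"] red_out_uniq s_vert red_M by metis
lemma redin: "v \<in> vertices L \<Longrightarrow> redin v \<in> red L \<and> r (redin v) = v"
proof -
  assume v: "v \<in> vertices L"
  then obtain f where f: "f \<in> red L" "r f = v" using red_in_ex by blast
  have "redin v = f" unfolding redin_def
    by (rule the_equality) (use f red_in_uniq v in auto)
  then show ?thesis using f by simp
qed

definition "nx v = r (redout v)"

lemma nx_V: "v \<in> V n \<Longrightarrow> nx v \<in> V n"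
  unfolding nx_def using redout[OF V_vert] red_same by metis

lemma nx_inj: "v \<in> vertices L \<Longrightarrow> w \<in> vertices L \<Longrightarrow> nx v = nx w \<Longrightarrow> v = w"
  unfolding nx_def using redout red_in_uniq r_vert red_M by metis

lemma nxk_V: "v \<in> V n \<Longrightarrow> (nx ^^ k) v \<in> V n"
  by (induction k) (auto simp: nx_V)

lemma nxk_inj: "v \<in> V n \<Longrightarrow> w \<in> V n \<Longrightarrow> (nx ^^ k) v = (nx ^^ k) w \<Longrightarrow> v = w"
proof (induction k)
  case (Suc k)
  then show ?case using nx_inj nxk_V V_vert by simp metis
qed simp

lemma nxk_surj: "w \<in> V n \<Longrightarrow> \<exists>v\<in>V n. (nx ^^ k) v = w"
proof -
  assume w: "w \<in> V n"
  have "inj_on (nx ^^ k) (V n)" using nxk_inj unfolding inj_on_def by blast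
  moreover have "(nx ^^ k) ` V n \<subseteq> V n" using nxk_V by blast
  ultimately have "(nx ^^ k) ` V n = V n" using endo_inj_surj Vfin by blast
  then show ?thesis using w by force
qed

lemma nxk_comm: "(nx ^^ a) ((nx ^^ b) v) = (nx ^^ b) ((nx ^^ a) v)"
  by (metis add.commute comp_apply funpow_add)

end

lemma funpow_fix: "g x = x \<Longrightarrow> (g ^^ j) x = x"
  by (induction j) auto
lemma funpow_comm: "(f ^^ a) ((f ^^ b) x) = (f ^^ b) ((f ^^ a) x)"
  by (metis add.commute comp_apply funpow_add)

context brat begin

primrec rp :: "nat \<Rightarrow> 'a \<Rightarrow> 'a" where
  "rp 0 v = v"
| "rp (Suc k) v = c (redout (r (rp k v))) (rp k v)"

lemma rp: "v \<in> vertices L \<Longrightarrow> rp k v \<in> M \<and> d (rp k v) = (0,k) \<and> s (rp k v) = v \<and> r (rp k v) = (nx ^^ k) v"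
proof (induction k)
  case 0
  then show ?case using vert_iff vert_rs by (simp add: zero_prod_def)
next
  case (Suc k)
  let ?w = "r (rp k v)"
  have w: "?w \<in> vertices L" using Suc r_vert by blast
  have g: "redout ?w \<in> red L" "s (redout ?w) = ?w" using redout[OF w] by auto
  have gm: "redout ?w \<in> M" "d (redout ?w) = (0,1)" using red_M g by auto
  show ?case using Suc g gm by (simp add: nx_def)
qed

lemma rp_uniq: "l \<in> M \<Longrightarrow> d l = (0,k) \<Longrightarrow> l = rp k (s l)"
proof (induction k arbitrary: l)
  case 0
  then show ?case using deg0_id[of l] by (simp add: zero_prod_def)
next
  case (Suc k)
  have le: "(0,1) \<le> d l" using Suc by (simp add: less_eq_prod_def)
  define a where "a = pre l (0,1)"
  define b where "b = suf l (0,1)"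
  note sp = split[OF Suc(2) le, folded a_def b_def]
  have db: "d b = (0,k)" using sp Suc by simp
  have sb: "s b = s l" using split_s[OF Suc(2) le] b_def by simp
  have bb: "b = rp k (s l)" using Suc.IH[of b] sp db sb by simp
  have "a \<in> red L" using sp unfolding red_def by simp
  then have "redout (s a) = a" using redout_eq by blast
  then have "a = redout (r b)" using sp by simp
  then show ?case using sp bb by simp
qed

lemma rp_add: "v \<in> vertices L \<Longrightarrow> rp (q + q') v = c (rp q ((nx ^^ q') v)) (rp q' v)"
proof -
  assume v: "v \<in> vertices L"
  have w: "(nx ^^ q') v \<in> vertices L" using rp[OF v, of q'] r_vert by metis
  note A = rp[OF w, of q] and B = rp[OF v, of q']
  have "c (rp q ((nx ^^ q') v)) (rp q' v) \<in> M" "d (c (rp q ((nx ^^ q') v)) (rp q' v)) = (0, q + q')"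
    "s (c (rp q ((nx ^^ q') v)) (rp q' v)) = v" using A B by auto
  then show ?thesis using rp_uniq by metis
qed

abbreviation "F \<equiv> Fmap L"

lemma Fmap:
  assumes e: "e \<in> blue L"
  shows "F e \<in> blue L" "r (F e) = nx (r e)" "s (F e) = nx (s e)"
    "c (redout (r e)) e = c (F e) (redout (s e))"
proof -
  have em: "e \<in> M" "d e = (1,0)" using blue_M e by auto
  have re: "r e \<in> vertices L" "s e \<in> vertices L" using r_vert s_vert em by auto
  define f where "f = redout (r e)"
  have f: "f \<in> red L" "s f = r e" using redout[OF re(1)] f_def by auto
  have fm: "f \<in> M" "d f = (0,1)" using red_M f by auto
  have tf: "(THE f. f \<in> red L \<and> s f = r e) = f" unfolding f_def redout_def by simp
  define X where "X = c f e"
  have X: "X \<in> M" "d X = (1,1)" "r X = r f" "s X = s e" unfolding X_def using f fm em by auto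
  have le: "(1,0) \<le> d X" using X(2) by (simp add: less_eq_prod_def)
  define e' where "e' = pre X (1,0)"
  define f' where "f' = suf X (1,0)"
  have sp: "e' \<in> M" "f' \<in> M" "d e' = (1,0)" "d f' = d X - (1,0)" "s e' = r f'" "c e' f' = X"
    using split[OF X(1) le] unfolding e'_def f'_def by auto
  have df': "d f' = (0,1)" using sp(4) X(2) by simp
  have e'b: "e' \<in> blue L" using sp unfolding blue_def by simp
  have f'r: "f' \<in> red L" using sp(2) df' unfolding red_def by simp
  have ex: "e' \<in> blue L \<and> (\<exists>f'\<in>red L. s e' = r f' \<and> c f e = c e' f')"
    using e'b f'r sp(5) sp(6)[unfolded X_def, symmetric] by blast
  have un: "e'' = e'" if h: "e'' \<in> blue L \<and> (\<exists>f'\<in>red L. s e'' = r f' \<and> c f e = c e'' f')" for e''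
  proof -
    obtain f'' where f'': "f'' \<in> red L" "s e'' = r f''" "c f e = c e'' f''" using h by blast
    have m: "e'' \<in> M" "d e'' = (1,0)" "f'' \<in> M" using h f'' blue_M red_M by auto
    have "c e'' f'' = c e' f'" using f''(3) sp(6) X_def by simp
    then show "e'' = e'"
      using fact_uniq[of e'' f'' e' f'] m f''(2) sp(1,2,3,5) by simp
  qed
  have Fe: "F e = e'"
    unfolding Fmap_def Let_def tf by (rule the_equality, rule ex, rule un)
  have sf': "s f' = s e" using split_s[OF X(1) le] X(4) unfolding f'_def by simp
  have f'eq: "f' = redout (s e)" using redout_eq[OF f'r] sf' by simp
  have re': "r e' = r f" using split_r[OF X(1) le] X(3) unfolding e'_def by simp
  show "F e \<in> blue L" using Fe e'b by simp
  show "r (F e) = nx (r e)" using Fe re' unfolding nx_def f_def by simp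
  show "s (F e) = nx (s e)" using Fe sp(5) f'eq unfolding nx_def by simp
  show "c (redout (r e)) e = c (F e) (redout (s e))" using Fe sp(6) f'eq unfolding X_def f_def by simp
qed

lemma F_inj:
  assumes "e1 \<in> blue L" "e2 \<in> blue L" "F e1 = F e2"
  shows "e1 = e2"
proof -
  note A = Fmap[OF assms(1)] and B = Fmap[OF assms(2)]
  have m: "e1 \<in> M" "e2 \<in> M" "d e1 = (1,0)" "d e2 = (1,0)" using blue_M assms by auto
  have v: "r e1 \<in> vertices L" "s e1 \<in> vertices L" "r e2 \<in> vertices L" "s e2 \<in> vertices L"
    using m r_vert s_vert by auto
  note o1 = redout[OF v(2)] and o2 = redout[OF v(4)]
  have "r (redout (s e1)) = r (redout (s e2))"
    using A(3) B(3) assms(3) unfolding nx_def by simp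
  then have eq: "redout (s e1) = redout (s e2)"
    using red_in_uniq[of "r (redout (s e1))"] o1 o2 r_vert red_M by metis
  note i1 = redout[OF v(1)] and i2 = redout[OF v(3)]
  have "c (redout (r e1)) e1 = c (redout (r e2)) e2" using A(4) B(4) assms(3) eq by simp
  then show ?thesis
    using fact_uniq[of "redout (r e1)" e1 "redout (r e2)" e2] i1 i2 m red_M by auto
qed

lemma Fk_blue: "e \<in> blue L \<Longrightarrow> (F ^^ k) e \<in> blue L"
  by (induction k) (auto simp: Fmap)

lemma Fk:
  assumes "e \<in> blue L"
  shows "r ((F ^^ k) e) = (nx ^^ k) (r e)" "s ((F ^^ k) e) = (nx ^^ k) (s e)"
  using assms by (induction k) (auto simp: Fmap Fk_blue)

lemma Fk_inj: "x \<in> blue L \<Longrightarrow> y \<in> blue L \<Longrightarrow> (F ^^ k) x = (F ^^ k) y \<Longrightarrow> x = y"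
proof (induction k)
  case (Suc k)
  then show ?case using F_inj Fk_blue by simp
qed simp

definition "Bn n = {e \<in> blue L. r e \<in> V n}"

lemma Bn_fin: "finite (Bn n)"
proof -
  have "Bn n \<subseteq> (\<Union>v\<in>V n. {l \<in> M. r l = v \<and> d l = (1,0)})"
    unfolding Bn_def blue_def by auto
  moreover have "finite (\<Union>v\<in>V n. {l \<in> M. r l = v \<and> d l = (1,0)})"
    using Vfin rowfin V_vert unfolding row_finite_def by blast
  ultimately show ?thesis using finite_subset by blast
qed

lemma Fk_Bn: "e \<in> Bn n \<Longrightarrow> (F ^^ k) e \<in> Bn n"
  unfolding Bn_def using Fk Fk_blue nxk_V by auto

lemma period_ex:
  assumes e: "e \<in> Bn n"
  shows "\<exists>k>0. (F ^^ k) e = e"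
proof -
  let ?h = "\<lambda>i. (F ^^ i) e"
  have im: "?h ` {0..card (Bn n)} \<subseteq> Bn n" using Fk_Bn e by auto
  have "\<not> inj_on ?h {0..card (Bn n)}"
  proof
    assume "inj_on ?h {0..card (Bn n)}"
    from card_inj_on_le[OF this im Bn_fin] show False by simp
  qed
  then obtain i j where ij: "i \<noteq> j" "?h i = ?h j" unfolding inj_on_def by blast
  have eb: "e \<in> blue L" using e Bn_def by simp
  have gen: "(F ^^ (b - a)) e = e" if "a < b" "?h a = ?h b" for a b
  proof -
    have "(F ^^ b) e = (F ^^ a) ((F ^^ (b - a)) e)"
      using that funpow_add[of a "b - a" F] by (simp add: add_diff_inverse_nat)
    then have "(F ^^ a) ((F ^^ (b - a)) e) = (F ^^ a) e" using that by simp
    then show ?thesis using Fk_inj Fk_blue eb by blast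
  qed
  show ?thesis
  proof (cases "i < j")
    case True then show ?thesis using gen[of i j] ij by (intro exI[of _ "j - i"]) auto
  next
    case False then have "j < i" using ij by simp
    then show ?thesis using gen[of j i] ij by (intro exI[of _ "i - j"]) auto
  qed
qed

lemma orb:
  assumes "e \<in> Bn n"
  shows "0 < orb L e" "(F ^^ orb L e) e = e"
proof -
  have "0 < orb L e \<and> (F ^^ orb L e) e = e"
    unfolding orb_def using LeastI_ex[OF period_ex[OF assms]] by simp
  then show "0 < orb L e" "(F ^^ orb L e) e = e" by auto
qed

lemma F_Ord:
  assumes "e \<in> Bn n"
  shows "(F ^^ (t * Ord_n L V n)) e = e"
proof -
  have "orb L e \<in> {orb L e | e. e \<in> blue L \<and> r e \<in> V n}" using assms Bn_def by auto
  then have "orb L e dvd Ord_n L V n" unfolding Ord_n_def by (rule dvd_Lcm)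
  then obtain u where u: "Ord_n L V n = orb L e * u" by blast
  have "(F ^^ (t * Ord_n L V n)) = (F ^^ orb L e) ^^ (t * u)"
    using u funpow_mult by (metis mult.commute mult.left_commute)
  then show ?thesis using funpow_fix[of "F ^^ orb L e" e "t * u"] orb[OF assms] by simp
qed

lemma vert_consist:
  assumes "e \<in> Bn n"
  shows "(nx ^^ mseq L V (Suc n)) (s e) = (nx ^^ mseq L V n) (s e)"
proof -
  have eb: "e \<in> blue L" using assms Bn_def by simp
  have "(nx ^^ (n * Ord_n L V n)) (s e) = s e"
    using Fk(2)[OF eb, of "n * Ord_n L V n"] F_Ord[OF assms, of n] by simp
  then show ?thesis using funpow_add[of "mseq L V n" "n * Ord_n L V n" nx] by simp
qed

definition "aV v = (nx ^^ mseq L V (lev v)) v"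
definition "aB e = (F ^^ mseq L V (lev (r e))) e"

lemma aV_V: "v \<in> V n \<Longrightarrow> aV v \<in> V n"
  unfolding aV_def using nxk_V by blast

lemma aV_vert: "v \<in> vertices L \<Longrightarrow> aV v \<in> vertices L"
  using aV_V lev_in V_vert by blast

lemma aV_inj: "v \<in> vertices L \<Longrightarrow> w \<in> vertices L \<Longrightarrow> aV v = aV w \<Longrightarrow> v = w"
proof -
  assume v: "v \<in> vertices L" and w: "w \<in> vertices L" and e: "aV v = aV w"
  have "aV v \<in> V (lev v)" "aV w \<in> V (lev w)" using aV_V lev_in v w by auto
  then have l: "lev v = lev w" using e Vdisj by metis
  then show "v = w" using e nxk_inj lev_in v w unfolding aV_def by metis
qed

lemma aV_surj: "w \<in> V n \<Longrightarrow> \<exists>v\<in>V n. aV v = w"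
proof -
  assume w: "w \<in> V n"
  obtain v where "v \<in> V n" "(nx ^^ mseq L V n) v = w" using nxk_surj[OF w] by blast
  then show ?thesis unfolding aV_def using lev by metis
qed

lemma aV_comm: "v \<in> vertices L \<Longrightarrow> (nx ^^ q) (aV v) = aV ((nx ^^ q) v)"
proof -
  assume v: "v \<in> vertices L"
  have "lev ((nx ^^ q) v) = lev v" using lev nxk_V lev_in v by metis
  then show ?thesis unfolding aV_def using funpow_comm by metis
qed

lemma aB:
  assumes e: "e \<in> blue L"
  shows "aB e \<in> blue L" "r (aB e) = aV (r e)" "s (aB e) = aV (s e)"
proof -
  define n where "n = lev (r e)"
  have rn: "r e \<in> V n" using lev_in r_vert blue_M e n_def by blast
  have sn: "s e \<in> V (Suc n)" using blue_s_lev[OF e rn] .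
  have eB: "e \<in> Bn n" using e rn Bn_def by simp
  show "aB e \<in> blue L" unfolding aB_def using Fk_blue e by simp
  show "r (aB e) = aV (r e)" unfolding aB_def aV_def using Fk(1)[OF e] n_def by simp
  have "s (aB e) = (nx ^^ mseq L V n) (s e)" unfolding aB_def using Fk(2)[OF e] n_def by simp
  also have "\<dots> = (nx ^^ mseq L V (Suc n)) (s e)" using vert_consist[OF eB] by simp
  also have "\<dots> = aV (s e)" unfolding aV_def using lev[OF sn] by simp
  finally show "s (aB e) = aV (s e)" .
qed

lemma aB_inj: "e1 \<in> blue L \<Longrightarrow> e2 \<in> blue L \<Longrightarrow> aB e1 = aB e2 \<Longrightarrow> e1 = e2"
proof -
  assume e: "e1 \<in> blue L" "e2 \<in> blue L" "aB e1 = aB e2"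
  have v: "r e1 \<in> vertices L" "r e2 \<in> vertices L" using e blue_M r_vert by auto
  have "aV (r e1) \<in> V (lev (r e1))" "aV (r e2) \<in> V (lev (r e2))" using aV_V lev_in v by auto
  then have "lev (r e1) = lev (r e2)" using aB(2) e Vdisj by metis
  then show "e1 = e2" using e Fk_inj unfolding aB_def by metis
qed

lemma aB_surj: "e' \<in> blue L \<Longrightarrow> \<exists>e\<in>blue L. aB e = e'"
proof -
  assume e': "e' \<in> blue L"
  define n where "n = lev (r e')"
  have eB: "e' \<in> Bn n" using lev_in r_vert blue_M e' n_def Bn_def by blast
  let ?g = "F ^^ mseq L V n"
  have "inj_on ?g (Bn n)" using Fk_inj unfolding inj_on_def Bn_def by blast
  moreover have "?g ` Bn n \<subseteq> Bn n" using Fk_Bn by blast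
  ultimately have "?g ` Bn n = Bn n" using endo_inj_surj Bn_fin by blast
  then obtain e where e: "e \<in> Bn n" "?g e = e'" using eB by force
  have "lev (r e) = n" using e lev Bn_def by auto
  then show ?thesis using e Bn_def aB_def by auto
qed

lemma aB_Fk: "e \<in> blue L \<Longrightarrow> (F ^^ q) (aB e) = aB ((F ^^ q) e)"
proof -
  assume e: "e \<in> blue L"
  have "lev (r ((F ^^ q) e)) = lev (r e)"
    using Fk(1)[OF e] lev nxk_V lev_in r_vert blue_M e by metis
  then show ?thesis unfolding aB_def using funpow_comm by metis
qed

lemma K:
  assumes e: "e \<in> blue L"
  shows "c (rp q (r e)) e = c ((F ^^ q) e) (rp q (s e))"
proof (induction q)
  case 0
  then show ?case using blue_M e by simp
next
  case (Suc q)
  have em: "e \<in> M" "d e = (1,0)" using blue_M e by auto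
  have v: "r e \<in> vertices L" "s e \<in> vertices L" using em r_vert s_vert by auto
  note R1 = rp[OF v(1), of q] and R2 = rp[OF v(2), of q]
  let ?E = "(F ^^ q) e"
  have E: "?E \<in> blue L" "r ?E = (nx ^^ q) (r e)" "s ?E = (nx ^^ q) (s e)" using Fk_blue Fk e by auto
  have Em: "?E \<in> M" "d ?E = (1,0)" using blue_M E by auto
  have w: "r ?E \<in> vertices L" "s ?E \<in> vertices L" using Em r_vert s_vert by auto
  let ?g = "redout (r ?E)" and ?g' = "redout (s ?E)"
  have g: "?g \<in> M" "s ?g = r ?E" "?g' \<in> M" "s ?g' = s ?E" using redout[OF w(1)] redout[OF w(2)] red_M by auto
  note FE = Fmap[OF E(1)]
  have FEm: "F ?E \<in> M" using FE blue_M by auto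
  have "c (rp (Suc q) (r e)) e = c (c ?g (rp q (r e))) e" using R1 E by simp
  also have "\<dots> = c ?g (c (rp q (r e)) e)" using assoc[of ?g "rp q (r e)" e] g R1 em E by simp
  also have "\<dots> = c ?g (c ?E (rp q (s e)))" using Suc by simp
  also have "\<dots> = c (c ?g ?E) (rp q (s e))" using assoc[of ?g ?E "rp q (s e)"] g Em R2 E by simp
  also have "\<dots> = c (c (F ?E) ?g') (rp q (s e))" using FE by simp
  also have "\<dots> = c (F ?E) (c ?g' (rp q (s e)))"
    using assoc[of "F ?E" ?g' "rp q (s e)"] FEm g R2 E FE nx_def by simp
  also have "c ?g' (rp q (s e)) = rp (Suc q) (s e)" using R2 E by simp
  finally show ?case by simp
qed

end

context brat begin

primrec A :: "nat \<Rightarrow> 'a \<Rightarrow> 'a" where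
  "A 0 l = rp (snd (d l)) (aV (s l))"
| "A (Suc p) l = c (aB (pre l (1,0))) (A p (suf l (1,0)))"

definition "alpha l = A (fst (d l)) l"

lemma dec:
  assumes l: "l \<in> M" and p: "fst (d l) = Suc p"
  shows "pre l (1,0) \<in> blue L" "suf l (1,0) \<in> M" "fst (d (suf l (1,0))) = p"
    "s (pre l (1,0)) = r (suf l (1,0))" "c (pre l (1,0)) (suf l (1,0)) = l"
    "r (pre l (1,0)) = r l" "s (suf l (1,0)) = s l"
    "snd (d (suf l (1,0))) = snd (d l)"
proof -
  have le: "(1,0) \<le> d l" using p by (cases "d l") (simp add: less_eq_prod_def)
  note sp = split[OF l le]
  show "pre l (1,0) \<in> blue L" using sp unfolding blue_def by simp
  show "suf l (1,0) \<in> M" "s (pre l (1,0)) = r (suf l (1,0))" "c (pre l (1,0)) (suf l (1,0)) = l"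
    using sp by auto
  show "fst (d (suf l (1,0))) = p" "snd (d (suf l (1,0))) = snd (d l)" using sp(4) p by (cases "d l"; simp)+
  show "r (pre l (1,0)) = r l" using split_r[OF l le] .
  show "s (suf l (1,0)) = s l" using split_s[OF l le] .
qed

lemma alpha_Suc:
  assumes l: "l \<in> M" and p: "fst (d l) = Suc p"
  shows "alpha l = c (aB (pre l (1,0))) (alpha (suf l (1,0)))"
  unfolding alpha_def using p dec(3)[OF l p] by simp

lemma alpha_0: "fst (d l) = 0 \<Longrightarrow> alpha l = rp (snd (d l)) (aV (s l))"
  unfolding alpha_def by simp

lemma d_red: "fst (d l) = 0 \<Longrightarrow> d l = (0, snd (d l))"
  by (cases "d l") simp

lemma red0: "l \<in> M \<Longrightarrow> fst (d l) = 0 \<Longrightarrow> l = rp (snd (d l)) (s l)"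
  using rp_uniq d_red by blast

lemma alpha_props:
  "l \<in> M \<Longrightarrow> fst (d l) = p \<Longrightarrow> alpha l \<in> M \<and> d (alpha l) = d l \<and> r (alpha l) = aV (r l) \<and> s (alpha l) = aV (s l)"
proof (induction p arbitrary: l)
  case 0
  let ?q = "snd (d l)" and ?v = "s l"
  have v: "?v \<in> vertices L" using s_vert 0 by simp
  have av: "aV ?v \<in> vertices L" using aV_vert v by simp
  note R = rp[OF av, of ?q] and R0 = rp[OF v, of ?q]
  have rl: "r l = (nx ^^ ?q) ?v" using red0[OF 0] R0 by metis
  have "alpha l = rp ?q (aV ?v)" using alpha_0 0 by simp
  moreover have "(0, ?q) = d l" using d_red[OF 0(2)] by simp
  ultimately show ?case using R rl aV_comm[OF v] by simp
next
  case (Suc p)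
  note D = dec[OF Suc.prems]
  let ?e = "pre l (1,0)" and ?t = "suf l (1,0)"
  note IH = Suc.IH[OF D(2) D(3)]
  note B = aB[OF D(1)]
  have Bm: "aB ?e \<in> M" "d (aB ?e) = (1,0)" using B blue_M by auto
  have em: "?e \<in> M" "d ?e = (1,0)" using D blue_M by auto
  have comp_ok: "s (aB ?e) = r (alpha ?t)" using B(3) IH D(4) by simp
  have al: "alpha l = c (aB ?e) (alpha ?t)" using alpha_Suc Suc.prems by simp
  have "d (c ?e ?t) = d ?e + d ?t" by (rule comp(4)[OF em(1) D(2) D(4)])
  then have dl: "d l = d ?e + d ?t" unfolding D(5) .
  have IH': "alpha ?t \<in> M" "d (alpha ?t) = d ?t" "r (alpha ?t) = aV (r ?t)" "s (alpha ?t) = aV (s ?t)"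
    using IH by auto
  note C = comp[OF Bm(1) IH'(1) comp_ok]
  show ?case
  proof (intro conjI)
    show "alpha l \<in> M" using al C by simp
    show "d (alpha l) = d l" using al C(4) dl Bm(2) em(2) IH'(2) by simp
    show "r (alpha l) = aV (r l)" using al C(2) B(2) D(6) by simp
    show "s (alpha l) = aV (s l)" using al C(3) IH'(4) D(7) by simp
  qed
qed

lemma alpha_M: "l \<in> M \<Longrightarrow> alpha l \<in> M" using alpha_props by blast
lemma alpha_d: "l \<in> M \<Longrightarrow> d (alpha l) = d l" using alpha_props by blast
lemma alpha_r: "l \<in> M \<Longrightarrow> r (alpha l) = aV (r l)" using alpha_props by blast
lemma alpha_s: "l \<in> M \<Longrightarrow> s (alpha l) = aV (s l)" using alpha_props by blast

lemma alpha_vert: "v \<in> vertices L \<Longrightarrow> alpha v = aV v"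
  using alpha_0[of v] vert_iff vert_rs by (simp add: zero_prod_def)

lemma alpha_blue: "e \<in> blue L \<Longrightarrow> alpha e = aB e"
proof -
  assume e: "e \<in> blue L"
  have em: "e \<in> M" "d e = (1,0)" using blue_M e by auto
  have p: "fst (d e) = Suc 0" using em by simp
  have "pre (c e (s e)) (d e) = e" "suf (c e (s e)) (d e) = s e" using split_uniq[of e "s e"] em by auto
  then have pe: "pre e (1,0) = e" "suf e (1,0) = s e" using em by auto
  have "alpha e = c (aB e) (alpha (s e))" using alpha_Suc[OF em(1) p] pe by simp
  also have "alpha (s e) = aV (s e)" using alpha_vert s_vert em by simp
  also have "aV (s e) = s (aB e)" using aB e by simp
  finally show ?thesis using aB(1)[OF e] blue_M by simp
qed

lemma RL:
  "m \<in> M \<Longrightarrow> fst (d m) = p \<Longrightarrow> alpha (c (rp q (r m)) m) = c (rp q (aV (r m))) (alpha m)"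
proof (induction p arbitrary: m)
  case 0
  let ?q' = "snd (d m)" and ?w = "s m"
  have w: "?w \<in> vertices L" using s_vert 0 by simp
  have aw: "aV ?w \<in> vertices L" using aV_vert w by simp
  have mm: "m = rp ?q' ?w" using red0 0 by blast
  have rm: "r m = (nx ^^ ?q') ?w" using rp[OF w, of ?q'] mm by metis
  have X: "c (rp q (r m)) m = rp (q + ?q') ?w" using rp_add[OF w, of q ?q'] rm mm by metis
  note RX = rp[OF w, of "q + ?q'"]
  have "alpha (c (rp q (r m)) m) = rp (q + ?q') (aV ?w)" using alpha_0[of "rp (q + ?q') ?w"] X RX by simp
  also have "\<dots> = c (rp q ((nx ^^ ?q') (aV ?w))) (rp ?q' (aV ?w))" using rp_add[OF aw] by simp
  also have "(nx ^^ ?q') (aV ?w) = aV (r m)" using aV_comm[OF w] rm by simp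
  also have "rp ?q' (aV ?w) = alpha m" using alpha_0 0 by simp
  finally show ?case .
next
  case (Suc p)
  note D = dec[OF Suc.prems]
  let ?e = "pre m (1,0)" and ?t = "suf m (1,0)"
  have em: "?e \<in> M" "d ?e = (1,0)" using D blue_M by auto
  have ve: "r ?e \<in> vertices L" "s ?e \<in> vertices L" using em r_vert s_vert by auto
  note R1 = rp[OF ve(1), of q] and R2 = rp[OF ve(2), of q]
  let ?E = "(F ^^ q) ?e"
  have E: "?E \<in> blue L" "?E \<in> M" "d ?E = (1,0)" "s ?E = r (rp q (s ?e))"
    using Fk_blue[OF D(1)] blue_M Fk(2)[OF D(1)] R2 by auto
  define T where "T = c (rp q (r ?t)) ?t"
  have T: "T \<in> M" "d T = (0,q) + d ?t" unfolding T_def using R2 D by auto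
  have rmE: "r m = r ?e" using D by simp
  have X: "c (rp q (r m)) m = c ?E T"
  proof -
    have "c (rp q (r m)) m = c (rp q (r ?e)) (c ?e ?t)" using D rmE by simp
    also have "\<dots> = c (c (rp q (r ?e)) ?e) ?t" using assoc[of "rp q (r ?e)" ?e ?t] R1 em D by simp
    also have "\<dots> = c (c ?E (rp q (s ?e))) ?t" using K[OF D(1)] by simp
    also have "\<dots> = c ?E (c (rp q (s ?e)) ?t)" using assoc[of ?E "rp q (s ?e)" ?t] E R2 D by simp
    finally show ?thesis unfolding T_def using D by simp
  qed
  have ET: "s ?E = r T" unfolding T_def using E R2 D by simp
  have XM: "c ?E T \<in> M" using E T ET by simp
  have fX: "fst (d (c ?E T)) = Suc (fst (d ?t))" using E T ET by simp
  have pre: "pre (c ?E T) (1,0) = ?E" "suf (c ?E T) (1,0) = T" using split_uniq[of ?E T] E T ET by auto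
  have "alpha (c (rp q (r m)) m) = c (aB ?E) (alpha T)"
    using alpha_Suc[OF XM fX] X pre by simp
  also have "alpha T = c (rp q (aV (r ?t))) (alpha ?t)" unfolding T_def using Suc.IH[OF D(2,3)] .
  finally have lhs: "alpha (c (rp q (r m)) m) = c (aB ?E) (c (rp q (aV (r ?t))) (alpha ?t))" .
  note B = aB[OF D(1)]
  have Bm: "aB ?e \<in> M" "d (aB ?e) = (1,0)" using B blue_M by auto
  have vB: "aV (r ?e) \<in> vertices L" "aV (s ?e) \<in> vertices L" using aV_vert ve by auto
  note R3 = rp[OF vB(1), of q] and R4 = rp[OF vB(2), of q]
  note AT = alpha_props[OF D(2) refl]
  have FB: "(F ^^ q) (aB ?e) \<in> M" using Fk_blue[OF B(1)] blue_M by auto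
  have sFB: "s ((F ^^ q) (aB ?e)) = r (rp q (aV (s ?e)))" using Fk(2)[OF B(1)] B R4 by simp
  have "c (rp q (aV (r m))) (alpha m) = c (rp q (aV (r ?e))) (c (aB ?e) (alpha ?t))"
    using alpha_Suc[OF Suc.prems] rmE by simp
  also have "\<dots> = c (c (rp q (aV (r ?e))) (aB ?e)) (alpha ?t)"
    using assoc[of "rp q (aV (r ?e))" "aB ?e" "alpha ?t"] R3 Bm B AT D by simp
  also have "c (rp q (aV (r ?e))) (aB ?e) = c ((F ^^ q) (aB ?e)) (rp q (aV (s ?e)))"
    using K[OF B(1)] B by simp
  also have "c (c ((F ^^ q) (aB ?e)) (rp q (aV (s ?e)))) (alpha ?t)
      = c ((F ^^ q) (aB ?e)) (c (rp q (aV (s ?e))) (alpha ?t))"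
    using assoc[of "(F ^^ q) (aB ?e)" "rp q (aV (s ?e))" "alpha ?t"] FB sFB R4 AT D by simp
  also have "(F ^^ q) (aB ?e) = aB ?E" using aB_Fk[OF D(1)] .
  finally have rhs: "c (rp q (aV (r m))) (alpha m) = c (aB ?E) (c (rp q (aV (s ?e))) (alpha ?t))" .
  show ?case using lhs rhs D by simp
qed

lemma alpha_comp:
  "l \<in> M \<Longrightarrow> m \<in> M \<Longrightarrow> s l = r m \<Longrightarrow> fst (d l) = p \<Longrightarrow> alpha (c l m) = c (alpha l) (alpha m)"
proof (induction p arbitrary: l)
  case 0
  have ll: "l = rp (snd (d l)) (r m)" using red0[OF 0(1,4)] 0 by simp
  have "alpha l = rp (snd (d l)) (aV (r m))" using alpha_0 0 by simp
  then show ?case using RL[OF 0(2) refl, of "snd (d l)"] ll by metis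
next
  case (Suc p)
  note D = dec[OF Suc.prems(1,4)]
  let ?e = "pre l (1,0)" and ?t = "suf l (1,0)"
  have em: "?e \<in> M" "d ?e = (1,0)" using D blue_M by auto
  have tm: "s ?t = r m" using D Suc.prems by simp
  have X: "c l m = c ?e (c ?t m)" using assoc[of ?e ?t m] D em tm Suc.prems by simp
  have XM: "c ?e (c ?t m) \<in> M" "s ?e = r (c ?t m)" using D em tm Suc.prems by auto
  have fX: "fst (d (c ?e (c ?t m))) = Suc (p + fst (d m))" using D em tm Suc.prems XM by simp
  have pre: "pre (c ?e (c ?t m)) (1,0) = ?e" "suf (c ?e (c ?t m)) (1,0) = c ?t m"
    using split_uniq[of ?e "c ?t m"] em XM D tm Suc.prems by auto
  note B = aB[OF D(1)]
  have Bm: "aB ?e \<in> M" using B blue_M by auto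
  note AT = alpha_props[OF D(2) refl] and AM = alpha_props[OF Suc.prems(2) refl]
  have "alpha (c l m) = c (aB ?e) (alpha (c ?t m))" using alpha_Suc[OF XM(1) fX] X pre by simp
  also have "alpha (c ?t m) = c (alpha ?t) (alpha m)" using Suc.IH[OF D(2) Suc.prems(2) tm D(3)] .
  also have "c (aB ?e) (c (alpha ?t) (alpha m)) = c (c (aB ?e) (alpha ?t)) (alpha m)"
    using assoc[of "aB ?e" "alpha ?t" "alpha m"] Bm AT AM B D tm by simp
  also have "c (aB ?e) (alpha ?t) = alpha l" using alpha_Suc[OF Suc.prems(1,4)] by simp
  finally show ?case .
qed

lemma alpha_inj:
  "l \<in> M \<Longrightarrow> l' \<in> M \<Longrightarrow> fst (d l) = p \<Longrightarrow> alpha l = alpha l' \<Longrightarrow> l = l'"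
proof (induction p arbitrary: l l')
  case 0
  have dd: "d l' = d l" using alpha_d 0 by metis
  have "s (alpha l) = s (alpha l')" using 0 by simp
  then have "aV (s l) = aV (s l')" using alpha_s[OF 0(1)] alpha_s[OF 0(2)] by simp
  then have "s l = s l'" using aV_inj s_vert 0 by blast
  then show ?case using red0[OF 0(1,3)] red0[of l'] 0 dd by metis
next
  case (Suc p)
  have dd: "d l' = d l" using alpha_d Suc.prems by metis
  have p': "fst (d l') = Suc p" using dd Suc.prems by simp
  note D = dec[OF Suc.prems(1,3)] and D' = dec[OF Suc.prems(2) p']
  note B = aB[OF D(1)] and B' = aB[OF D'(1)]
  note AT = alpha_props[OF D(2) refl] and AT' = alpha_props[OF D'(2) refl]
  have "c (aB (pre l (1,0))) (alpha (suf l (1,0))) = c (aB (pre l' (1,0))) (alpha (suf l' (1,0)))"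
    using alpha_Suc[OF Suc.prems(1,3)] alpha_Suc[OF Suc.prems(2) p'] Suc.prems(4) by simp
  then have "aB (pre l (1,0)) = aB (pre l' (1,0)) \<and> alpha (suf l (1,0)) = alpha (suf l' (1,0))"
    using fact_uniq[of "aB (pre l (1,0))" "alpha (suf l (1,0))" "aB (pre l' (1,0))" "alpha (suf l' (1,0))"]
      B B' blue_M AT AT' D D' by simp
  then have "pre l (1,0) = pre l' (1,0)" "suf l (1,0) = suf l' (1,0)"
    using aB_inj D D' Suc.IH D(3) by blast+
  then show ?case using D(5) D'(5) by metis
qed

lemma alpha_surj:
  "\<mu> \<in> M \<Longrightarrow> fst (d \<mu>) = p \<Longrightarrow> \<exists>l\<in>M. alpha l = \<mu>"
proof (induction p arbitrary: \<mu>)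
  case 0
  have sv: "s \<mu> \<in> V (lev (s \<mu>))" using lev_in s_vert 0 by blast
  obtain w where w: "w \<in> V (lev (s \<mu>))" "aV w = s \<mu>" using aV_surj[OF sv] by blast
  have wv: "w \<in> vertices L" using V_vert w by blast
  note R = rp[OF wv, of "snd (d \<mu>)"]
  have "alpha (rp (snd (d \<mu>)) w) = rp (snd (d \<mu>)) (aV w)" using alpha_0[of "rp (snd (d \<mu>)) w"] R by simp
  also have "\<dots> = \<mu>" using w red0[OF 0] by simp
  finally show ?case using R by blast
next
  case (Suc p)
  note D = dec[OF Suc.prems]
  obtain e where e: "e \<in> blue L" "aB e = pre \<mu> (1,0)" using aB_surj D by blast
  obtain t where t: "t \<in> M" "alpha t = suf \<mu> (1,0)" using Suc.IH[OF D(2,3)] by blast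
  have em: "e \<in> M" "d e = (1,0)" using blue_M e by auto
  have "aV (s e) = aV (r t)" using aB(3)[OF e(1)] alpha_r[OF t(1)] e t D by simp
  then have st: "s e = r t" using aV_inj s_vert r_vert em t by blast
  have "alpha (c e t) = c (alpha e) (alpha t)" using alpha_comp[OF em(1) t(1) st refl] .
  also have "\<dots> = \<mu>" using alpha_blue[OF e(1)] e t D by simp
  finally show ?case using em t st by (metis comp(1))
qed

lemma alpha_aut: "is_automorphism L alpha"
  unfolding is_automorphism_def
proof (intro conjI ballI impI)
  show "bij_betw alpha M M"
    unfolding bij_betw_def inj_on_def
    using alpha_inj alpha_surj alpha_M by blast
next
  fix l assume l: "l \<in> M"
  show "d (alpha l) = d l" using alpha_d l .
  show "r (alpha l) = alpha (r l)" using alpha_r l alpha_vert r_vert by simp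
  show "s (alpha l) = alpha (s l)" using alpha_s l alpha_vert s_vert by simp
next
  fix l m assume "l \<in> M" "m \<in> M" "s l = r m"
  then show "alpha (c l m) = c (alpha l) (alpha m)" using alpha_comp by blast
qed

lemma alpha_uniq:
  assumes b: "is_automorphism L b" and bb: "\<And>e. e \<in> blue L \<Longrightarrow> b e = aB e"
  shows "l \<in> M \<Longrightarrow> b l = alpha l"
proof -
  have bM: "\<And>l. l \<in> M \<Longrightarrow> b l \<in> M" using b unfolding is_automorphism_def bij_betw_def by blast
  have bd: "\<And>l. l \<in> M \<Longrightarrow> d (b l) = d l \<and> r (b l) = b (r l) \<and> s (b l) = b (s l)"
    using b unfolding is_automorphism_def by blast
  have bc: "\<And>l m. l \<in> M \<Longrightarrow> m \<in> M \<Longrightarrow> s l = r m \<Longrightarrow> b (c l m) = c (b l) (b m)"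
    using b unfolding is_automorphism_def by blast
  have bv: "b v = aV v" if v: "v \<in> vertices L" for v
  proof -
    obtain e where e: "e \<in> blue L" "r e = v" using nosrc v by blast
    have "b v = r (b e)" using bd[of e] e blue_M by simp
    also have "\<dots> = aV v" using bb aB e by simp
    finally show ?thesis .
  qed
  have brp: "b (rp q v) = rp q (aV v)" if v: "v \<in> vertices L" for v q
  proof -
    note R = rp[OF v, of q]
    have "b (rp q v) \<in> M" "d (b (rp q v)) = (0,q)" "s (b (rp q v)) = aV v"
      using bM bd R bv v by auto
    then show ?thesis using rp_uniq by metis
  qed
  show "l \<in> M \<Longrightarrow> b l = alpha l"
  proof (induction "fst (d l)" arbitrary: l)
    case 0
    have "l = rp (snd (d l)) (s l)" using red0 0 by simp
    then have "b l = rp (snd (d l)) (aV (s l))" using brp s_vert 0 by metis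
    then show ?case using alpha_0 0 by simp
  next
    case (Suc p)
    note D = dec[OF Suc.prems Suc.hyps(2)[symmetric]]
    have "b l = c (b (pre l (1,0))) (b (suf l (1,0)))" using bc D blue_M by metis
    also have "\<dots> = c (aB (pre l (1,0))) (alpha (suf l (1,0)))" using bb D Suc.hyps by simp
    also have "\<dots> = alpha l" using alpha_Suc[OF Suc.prems Suc.hyps(2)[symmetric]] by simp
    finally show ?case .
  qed
qed

end

context tg begin

lemma aut:
  assumes "is_automorphism L a"
  shows "\<And>l. l \<in> M \<Longrightarrow> a l \<in> M" "\<And>l. l \<in> M \<Longrightarrow> d (a l) = d l"
    "\<And>l. l \<in> M \<Longrightarrow> r (a l) = a (r l)" "\<And>l. l \<in> M \<Longrightarrow> s (a l) = a (s l)"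
    "\<And>l m. l \<in> M \<Longrightarrow> m \<in> M \<Longrightarrow> s l = r m \<Longrightarrow> a (c l m) = c (a l) (a m)"
    "inj_on a M" "a ` M = M"
  using assms unfolding is_automorphism_def bij_betw_def by auto

lemma aut_inv:
  assumes a: "is_automorphism L a"
  shows "is_automorphism L (inv_into M a)"
    "\<And>l. l \<in> M \<Longrightarrow> inv_into M a (a l) = l" "\<And>l. l \<in> M \<Longrightarrow> a (inv_into M a l) = l"
proof -
  note A = aut[OF a]
  let ?b = "inv_into M a"
  have bij: "bij_betw a M M" using A by (simp add: bij_betw_def)
  show ba: "\<And>l. l \<in> M \<Longrightarrow> ?b (a l) = l" using inv_into_f_f A(6) by metis
  show ab: "\<And>l. l \<in> M \<Longrightarrow> a (?b l) = l" using f_inv_into_f A(7) by metis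
  have bM: "\<And>l. l \<in> M \<Longrightarrow> ?b l \<in> M" using inv_into_into A(7) by metis
  show "is_automorphism L ?b"
    unfolding is_automorphism_def
  proof (intro conjI ballI impI)
    show "bij_betw ?b M M" using bij_betw_inv_into[OF bij] .
  next
    fix l assume l: "l \<in> M"
    have "d (a (?b l)) = d (?b l)" using A bM l by simp
    then show "d (?b l) = d l" using ab l by simp
    have "a (r (?b l)) = r l" using A(3)[OF bM[OF l]] ab l by simp
    then show "r (?b l) = ?b (r l)" using ba[of "r (?b l)"] bM l by (metis rs(1))
    have "a (s (?b l)) = s l" using A(4)[OF bM[OF l]] ab l by simp
    then show "s (?b l) = ?b (s l)" using ba[of "s (?b l)"] bM l by (metis rs(2))
  next
    fix l m assume lm: "l \<in> M" "m \<in> M" "s l = r m"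
    have "a (s (?b l)) = a (r (?b m))"
      using A(4)[OF bM[OF lm(1)]] A(3)[OF bM[OF lm(2)]] ab[OF lm(1)] ab[OF lm(2)] lm(3) by simp
    then have sr: "s (?b l) = r (?b m)" using A(6) bM lm unfolding inj_on_def by (meson rs(1,2))
    have "a (c (?b l) (?b m)) = c l m" using A(5)[OF bM[OF lm(1)] bM[OF lm(2)] sr] ab lm by simp
    then show "?b (c l m) = c (?b l) (?b m)" using ba[of "c (?b l) (?b m)"] bM lm sr by simp
  qed
qed

lemma pm:
  assumes a: "is_automorphism L a" and x: "x \<in> inf_paths L"
  shows "path_map a x \<in> inf_paths L" "\<And>p. shift p (path_map a x) = path_map a (shift p x)"
    "path_map a x 0 0 = a (x 0 0)" "\<And>m n. m \<le> n \<Longrightarrow> path_map a x m n = a (x m n)"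
proof -
  note A = aut[OF a]
  show "path_map a x \<in> inf_paths L"
    unfolding inf_paths_def mem_Collect_eq
  proof (intro conjI allI impI)
    fix m n :: "nat \<times> nat" assume mn: "m \<le> n"
    have "path_map a x m n = a (x m n)" unfolding path_map_def using mn by simp
    then show "path_map a x m n \<in> M" "d (path_map a x m n) = n - m"
      using A(1)[OF ip(1)[OF x mn]] A(2)[OF ip(1)[OF x mn]] ip(2)[OF x mn] by auto
  next
    fix m n p :: "nat \<times> nat" assume mnp: "m \<le> n \<and> n \<le> p"
    then have mp: "m \<le> p" by auto
    have e: "path_map a x m n = a (x m n)" "path_map a x n p = a (x n p)" "path_map a x m p = a (x m p)"
      unfolding path_map_def using mnp mp by auto
    have X: "x m n \<in> M" "x n p \<in> M" "s (x m n) = r (x n p)" "x m p = c (x m n) (x n p)"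
      using ip(1)[OF x] ip(3)[OF x, of m n p] ip(4)[OF x, of m n p] mnp by auto
    show "s (path_map a x m n) = r (path_map a x n p)" using e X A(3)[OF X(2)] A(4)[OF X(1)] by simp
    show "path_map a x m p = c (path_map a x m n) (path_map a x n p)" using e X A(5)[OF X(1,2,3)] by simp
  next
    fix m n :: "nat \<times> nat" assume "\<not> m \<le> n"
    then show "path_map a x m n = undefined" unfolding path_map_def by simp
  qed
  show "\<And>p. shift p (path_map a x) = path_map a (shift p x)"
    unfolding shift_def path_map_def by auto
  show "path_map a x 0 0 = a (x 0 0)" unfolding path_map_def by simp
  show "\<And>m n. m \<le> n \<Longrightarrow> path_map a x m n = a (x m n)" unfolding path_map_def by simp
qed

lemma pm_inv:
  assumes a: "is_automorphism L a" and x: "x \<in> inf_paths L"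
  shows "path_map (inv_into M a) (path_map a x) = x" "path_map a (path_map (inv_into M a) x) = x"
proof -
  note B = aut_inv[OF a]
  show "path_map (inv_into M a) (path_map a x) = x"
    unfolding path_map_def using ip(1)[OF x] ip(5)[OF x] B(2) by (intro ext) auto
  show "path_map a (path_map (inv_into M a) x) = x"
    unfolding path_map_def using ip(1)[OF x] ip(5)[OF x] B(3) by (intro ext) auto
qed

lemma pm_inj:
  assumes a: "is_automorphism L a" and x: "x \<in> inf_paths L" and y: "y \<in> inf_paths L"
    and e: "path_map a x = path_map a y"
  shows "x = y"
  using pm_inv(1)[OF a x] pm_inv(1)[OF a y] e by metis

lemma pm_image:
  assumes a: "is_automorphism L a"
  shows "path_map a ` inf_paths L = inf_paths L"
proof
  show "path_map a ` inf_paths L \<subseteq> inf_paths L" using pm(1)[OF a] by blast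
  show "inf_paths L \<subseteq> path_map a ` inf_paths L"
  proof
    fix y assume y: "y \<in> inf_paths L"
    have "path_map (inv_into M a) y \<in> inf_paths L" using pm(1)[OF aut_inv(1)[OF a] y] .
    then show "y \<in> path_map a ` inf_paths L" using pm_inv(2)[OF a y] by force
  qed
qed

lemma pm_concat:
  assumes a: "is_automorphism L a" and l: "l \<in> M" and z: "z \<in> inf_paths L" and zs: "z 0 0 = s l"
  shows "path_map a (pconcat L l z) = pconcat L (a l) (path_map a z)"
proof -
  note A = aut[OF a]
  note P = pconcat[OF l z zs]
  note Y = pm[OF a P(1)]
  have "pconcat L (a l) (path_map a z) = path_map a (pconcat L l z)"
  proof (rule pconcat_eq)
    show "a l \<in> M" using A l by simp
    show "path_map a z \<in> inf_paths L" using pm(1)[OF a z] .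
    show "path_map a z 0 0 = s (a l)" using pm(3)[OF a z] zs A l by simp
    show "path_map a (pconcat L l z) \<in> inf_paths L" using Y(1) .
    show "path_map a (pconcat L l z) 0 (d (a l)) = a l" using Y(4)[of 0 "d l"] P A l by simp
    show "shift (d (a l)) (path_map a (pconcat L l z)) = path_map a z" using Y(2) P A l by simp
  qed
  then show ?thesis by simp
qed

lemma cyl_sub: "x \<in> cyl L l \<Longrightarrow> l \<in> M \<Longrightarrow> x \<in> inf_paths L"
  unfolding cyl_def prange_def using pconcat by auto

lemma cyl_img:
  assumes a: "is_automorphism L a" and l: "l \<in> M"
  shows "path_map a ` cyl L l = cyl L (a l)"
proof
  note A = aut[OF a]
  show "path_map a ` cyl L l \<subseteq> cyl L (a l)"
  proof
    fix y assume "y \<in> path_map a ` cyl L l"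
    then obtain z where z: "z \<in> inf_paths L" "z 0 0 = s l" "y = path_map a (pconcat L l z)"
      unfolding cyl_def prange_def by auto
    have "y = pconcat L (a l) (path_map a z)" using pm_concat[OF a l z(1,2)] z by simp
    moreover have "path_map a z \<in> inf_paths L" "path_map a z 0 0 = s (a l)"
      using pm[OF a z(1)] z A l by auto
    ultimately show "y \<in> cyl L (a l)" unfolding cyl_def prange_def by blast
  qed
  show "cyl L (a l) \<subseteq> path_map a ` cyl L l"
  proof
    fix y assume "y \<in> cyl L (a l)"
    then obtain z' where z': "z' \<in> inf_paths L" "z' 0 0 = s (a l)" "y = pconcat L (a l) z'"
      unfolding cyl_def prange_def by auto
    let ?b = "inv_into M a"
    note B = aut_inv[OF a]
    define z where "z = path_map ?b z'"
    have z: "z \<in> inf_paths L" "z 0 0 = s l" "path_map a z = z'"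
      using pm[OF B(1) z'(1)] z' A l B pm_inv(2)[OF a z'(1)] unfolding z_def by auto
    have "y = path_map a (pconcat L l z)" using pm_concat[OF a l z(1,2)] z z' by simp
    moreover have "pconcat L l z \<in> cyl L l" using z unfolding cyl_def prange_def by blast
    ultimately show "y \<in> path_map a ` cyl L l" by blast
  qed
qed

lemma path_homeo:
  assumes a: "is_automorphism L a"
  shows "homeomorphic_map (path_top L) (path_top L) (path_map a)"
  unfolding path_top_def
proof (rule homeo_generated[where g = "path_map (inv_into M a)"])
  note B = aut_inv[OF a]
  fix U assume "U \<in> {cyl L l |l. l \<in> M}"
  then obtain l where l: "l \<in> M" "U = cyl L l" by blast
  show "path_map a ` U \<in> {cyl L l |l. l \<in> M}" using cyl_img[OF a l(1)] l aut(1)[OF a] by auto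
  show "path_map (inv_into M a) ` U \<in> {cyl L l |l. l \<in> M}"
    using cyl_img[OF B(1) l(1)] l aut(1)[OF B(1)] by auto
next
  fix x assume "x \<in> \<Union>{cyl L l |l. l \<in> M}"
  then have x: "x \<in> inf_paths L" using cyl_sub by blast
  show "path_map (inv_into M a) (path_map a x) = x" using pm_inv(1)[OF a x] .
  show "path_map a (path_map (inv_into M a) x) = x" using pm_inv(2)[OF a x] .
qed

lemma gm_PG:
  assumes a: "is_automorphism L a" and g: "g \<in> path_groupoid L"
  shows "groupoid_map a g \<in> path_groupoid L"
proof -
  obtain x k y where g': "g = (x, k, y)" by (cases g) auto
  have x: "x \<in> inf_paths L" and y: "y \<in> inf_paths L" and
    e: "\<exists>l m. shift l x = shift m y \<and> k = toZ l - toZ m"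
    using g g' unfolding path_groupoid_def by auto
  obtain l m where lm: "shift l x = shift m y" "k = toZ l - toZ m" using e by blast
  have sh: "shift l (path_map a x) = shift m (path_map a y)" using pm(2)[OF a x] pm(2)[OF a y] lm by simp
  have gg: "groupoid_map a g = (path_map a x, k, path_map a y)" unfolding groupoid_map_def g' by simp
  show ?thesis unfolding gg path_groupoid_def
    using pm(1)[OF a x] pm(1)[OF a y] sh lm(2) by blast
qed

lemma gm_inv:
  assumes a: "is_automorphism L a" and g: "fst g \<in> inf_paths L" "snd (snd g) \<in> inf_paths L"
  shows "groupoid_map (inv_into M a) (groupoid_map a g) = g"
  using pm_inv(1)[OF a g(1)] pm_inv(1)[OF a g(2)] unfolding groupoid_map_def by (cases g) auto

lemma PG_comp: "g \<in> path_groupoid L \<Longrightarrow> fst g \<in> inf_paths L \<and> snd (snd g) \<in> inf_paths L"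
  unfolding path_groupoid_def by auto

lemma gcyl_img:
  assumes a: "is_automorphism L a" and l: "l \<in> M" and m: "m \<in> M" and lm: "s l = s m"
  shows "groupoid_map a ` gcyl L l m = gcyl L (a l) (a m)"
proof
  note A = aut[OF a]
  show "groupoid_map a ` gcyl L l m \<subseteq> gcyl L (a l) (a m)"
  proof
    fix y assume "y \<in> groupoid_map a ` gcyl L l m"
    then obtain z where z: "z \<in> inf_paths L" "z 0 0 = s l"
      "y = groupoid_map a (pconcat L l z, toZ (d l) - toZ (d m), pconcat L m z)"
      unfolding gcyl_def prange_def by auto
    have "y = (pconcat L (a l) (path_map a z), toZ (d (a l)) - toZ (d (a m)), pconcat L (a m) (path_map a z))"
      using pm_concat[OF a l z(1,2)] pm_concat[OF a m z(1)] z lm A l m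
      unfolding groupoid_map_def by simp
    moreover have "path_map a z \<in> inf_paths L" "path_map a z 0 0 = s (a l)"
      using pm[OF a z(1)] z A l by auto
    ultimately show "y \<in> gcyl L (a l) (a m)" unfolding gcyl_def prange_def by blast
  qed
  show "gcyl L (a l) (a m) \<subseteq> groupoid_map a ` gcyl L l m"
  proof
    fix y assume "y \<in> gcyl L (a l) (a m)"
    then obtain z' where z': "z' \<in> inf_paths L" "z' 0 0 = s (a l)"
      "y = (pconcat L (a l) z', toZ (d (a l)) - toZ (d (a m)), pconcat L (a m) z')"
      unfolding gcyl_def prange_def by auto
    let ?b = "inv_into M a"
    note B = aut_inv[OF a]
    define z where "z = path_map ?b z'"
    have z: "z \<in> inf_paths L" "z 0 0 = s l" "path_map a z = z'"
      using pm[OF B(1) z'(1)] z' A l B pm_inv(2)[OF a z'(1)] unfolding z_def by auto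
    have "y = groupoid_map a (pconcat L l z, toZ (d l) - toZ (d m), pconcat L m z)"
      using pm_concat[OF a l z(1,2)] pm_concat[OF a m z(1)] z z' lm A l m
      unfolding groupoid_map_def by simp
    moreover have "(pconcat L l z, toZ (d l) - toZ (d m), pconcat L m z) \<in> gcyl L l m"
      using z unfolding gcyl_def prange_def by blast
    ultimately show "y \<in> groupoid_map a ` gcyl L l m" by blast
  qed
qed

lemma gcyl_sub: "g \<in> gcyl L l m \<Longrightarrow> l \<in> M \<Longrightarrow> m \<in> M \<Longrightarrow> s l = s m \<Longrightarrow>
    fst g \<in> inf_paths L \<and> snd (snd g) \<in> inf_paths L"
  unfolding gcyl_def prange_def using pconcat by auto

lemma groupoid_aut:
  assumes a: "is_automorphism L a"
  shows "top_groupoid_aut L (groupoid_map a)"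
  unfolding top_groupoid_aut_def
proof (intro conjI ballI)
  let ?G = "groupoid_map a" and ?H = "groupoid_map (inv_into M a)"
  note B = aut_inv[OF a]
  show "bij_betw ?G (path_groupoid L) (path_groupoid L)"
    unfolding bij_betw_def
  proof
    show "inj_on ?G (path_groupoid L)"
    proof (rule inj_onI)
      fix g h assume gh: "g \<in> path_groupoid L" "h \<in> path_groupoid L" "?G g = ?G h"
      have "g = ?H (?G g)" using gm_inv[OF a] PG_comp[OF gh(1)] by simp
      also have "\<dots> = ?H (?G h)" using gh(3) by simp
      also have "\<dots> = h" using gm_inv[OF a] PG_comp[OF gh(2)] by simp
      finally show "g = h" .
    qed
    show "?G ` path_groupoid L = path_groupoid L"
    proof
      show "?G ` path_groupoid L \<subseteq> path_groupoid L" using gm_PG[OF a] by blast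
      show "path_groupoid L \<subseteq> ?G ` path_groupoid L"
      proof
        fix h assume h: "h \<in> path_groupoid L"
        have "?H h \<in> path_groupoid L" using gm_PG[OF B(1) h] .
        moreover have "?G (?H h) = h"
          using pm_inv(2)[OF a conjunct1[OF PG_comp[OF h]]] pm_inv(2)[OF a conjunct2[OF PG_comp[OF h]]]
          unfolding groupoid_map_def by (cases h) auto
        ultimately show "h \<in> ?G ` path_groupoid L" by force
      qed
    qed
  qed
next
  fix g h assume g: "g \<in> path_groupoid L" and h: "h \<in> path_groupoid L"
  have "snd (snd g) = fst h \<longleftrightarrow> path_map a (snd (snd g)) = path_map a (fst h)"
  proof
    assume "path_map a (snd (snd g)) = path_map a (fst h)"
    then show "snd (snd g) = fst h"
      using pm_inj[OF a conjunct2[OF PG_comp[OF g]] conjunct1[OF PG_comp[OF h]]] by simp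
  qed simp
  then show "composable g h = composable (groupoid_map a g) (groupoid_map a h)"
    unfolding composable_def groupoid_map_def by simp
  show "composable g h \<longrightarrow> groupoid_map a (gmult g h) = gmult (groupoid_map a g) (groupoid_map a h)"
    unfolding gmult_def groupoid_map_def by simp
next
  fix g assume "g \<in> path_groupoid L"
  show "groupoid_map a (ginv g) = ginv (groupoid_map a g)"
    unfolding ginv_def groupoid_map_def by simp
next
  note B = aut_inv[OF a]
  show "homeomorphic_map (groupoid_top L) (groupoid_top L) (groupoid_map a)"
    unfolding groupoid_top_def
  proof (rule homeo_generated[where g = "groupoid_map (inv_into M a)"])
    fix U assume "U \<in> {gcyl L l m |l m. l \<in> M \<and> m \<in> M \<and> s l = s m}"
    then obtain l m where lm: "l \<in> M" "m \<in> M" "s l = s m" "U = gcyl L l m" by blast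
    have "s (a l) = s (a m)" using aut(4)[OF a] lm by simp
    then show "groupoid_map a ` U \<in> {gcyl L l m |l m. l \<in> M \<and> m \<in> M \<and> s l = s m}"
      using gcyl_img[OF a lm(1-3)] lm aut(1)[OF a] by blast
    have "s (inv_into M a l) = s (inv_into M a m)" using aut(4)[OF B(1)] lm by simp
    then show "groupoid_map (inv_into M a) ` U \<in> {gcyl L l m |l m. l \<in> M \<and> m \<in> M \<and> s l = s m}"
      using gcyl_img[OF B(1) lm(1-3)] lm aut(1)[OF B(1)] by blast
  next
    fix x assume "x \<in> \<Union>{gcyl L l m |l m. l \<in> M \<and> m \<in> M \<and> s l = s m}"
    then have x: "fst x \<in> inf_paths L" "snd (snd x) \<in> inf_paths L" using gcyl_sub by blast+
    show "groupoid_map (inv_into M a) (groupoid_map a x) = x" using gm_inv[OF a x] .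
    show "groupoid_map a (groupoid_map (inv_into M a) x) = x"
      using pm_inv(2)[OF a x(1)] pm_inv(2)[OF a x(2)] unfolding groupoid_map_def by (cases x) auto
  qed
qed

end

theorem lemma7p3:
  fixes L :: "'a two_graph" and V :: "nat \<Rightarrow> 'a set"
  assumes "rank2_bratteli L V"
  shows "\<exists>a. is_automorphism L a \<and>
             (\<forall>n. \<forall>e. e \<in> blue L \<and> rg L e \<in> V n \<longrightarrow> a e = (Fmap L ^^ mseq L V n) e) \<and>
             (\<forall>b. is_automorphism L b \<and>
                  (\<forall>n. \<forall>e. e \<in> blue L \<and> rg L e \<in> V n \<longrightarrow> b e = (Fmap L ^^ mseq L V n) e)
                  \<longrightarrow> (\<forall>l\<in>Mor L. b l = a l)) \<and>
             path_map a ` inf_paths L = inf_paths L \<and>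
             homeomorphic_map (path_top L) (path_top L) (path_map a) \<and>
             top_groupoid_aut L (groupoid_map a)"
proof -
  interpret brat L V by (rule brat.intro[OF assms])
  have aut: "is_automorphism L alpha" by (rule alpha_aut)
  have blue: "\<forall>n. \<forall>e. e \<in> blue L \<and> rg L e \<in> V n \<longrightarrow> alpha e = (Fmap L ^^ mseq L V n) e"
  proof (intro allI impI)
    fix n e assume e: "e \<in> blue L \<and> rg L e \<in> V n"
    then have "lev (r e) = n" using lev by blast
    then show "alpha e = (Fmap L ^^ mseq L V n) e" using alpha_blue e unfolding aB_def by simp
  qed
  have uniq: "\<forall>b. is_automorphism L b \<and>
                  (\<forall>n. \<forall>e. e \<in> blue L \<and> rg L e \<in> V n \<longrightarrow> b e = (Fmap L ^^ mseq L V n) e)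
                  \<longrightarrow> (\<forall>l\<in>Mor L. b l = alpha l)"
  proof (intro allI impI ballI)
    fix b l assume b: "is_automorphism L b \<and>
                  (\<forall>n. \<forall>e. e \<in> blue L \<and> rg L e \<in> V n \<longrightarrow> b e = (Fmap L ^^ mseq L V n) e)"
      and l: "l \<in> Mor L"
    have bb: "b e = aB e" if e: "e \<in> blue L" for e
    proof -
      have "r e \<in> V (lev (r e))" using lev_in r_vert blue_M e by blast
      then show ?thesis using b e unfolding aB_def by blast
    qed
    show "b l = alpha l" using alpha_uniq[of b] b bb l by blast
  qed
  show ?thesis
    using aut blue uniq pm_image[OF aut] path_homeo[OF aut] groupoid_aut[OF aut] by blast
qed


end
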